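(* Let $(X,\langle\cdot,\cdot\rangle,\|\cdot\|)$ be a separable Hilbert space, $A:D(A)\subset X\to X$ a densely defined self-adjoint linear operator with $\langle Ax,x\rangle\ge0$ for all $x\in D(A)$ and with $(\lambda I+A)^{-1}$ compact for some $\lambda>0$; let $0\le\lambda_1\le\lambda_2\le\dots$ be its eigenvalues with associated orthonormal eigenbasis $\{\varphi_k\}_{k\ge1}$. Let $B:D(B)\subset X\to X$ be linear with $D(A^{1/2})\subset D(B)$ and $\|B\varphi\|\le C_B\|\varphi\|_{1/2}$ for all $\varphi\in D(A^{1/2})$, for some constant $C_B>0$. Let $T>0$, $v_0\in D(A^{1/2})$ and $p\in L^2(0,T)$ be such that $\|p\|_{L^2(0,T)}\le N_T\|v_0\|$ for some constant $N_T>0$. Let $v(\cdot;v_0,p)$ be the solution of $$v'(t)+Av(t)+p(t)Bv(t)+p(t)B\varphi_1=0,\ t\in[0,T],\qquad v(0)=v_0.$$ Then $$\sup_{t\in[0,T]}\|v(t;v_0,p)\|_{1/2}^2\le C_{1,1}(T,\|v_0\|_{1/2})\,\|v_0\|_{1/2}^2,$$ where $$C_{1,1}(T,\|v_0\|_{1/2}):=e^{C_BN_T\left(\frac52C_BN_T\|v_0\|_{1/2}+2\sqrt T\right)\|v_0\|_{1/2}+T}\Big(1+\tfrac52C_B^2(1+\lambda_1^{1/2})^2N_T^2+\tfrac32C_B^2N_T^2\big(C_B^2(1+\lambda_1^{1/2})^2N_T^2+1\big)\|v_0\|_{1/2}^2\Big).$$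
   Context: For $s\ge0$, $D(A^s)=\{x:\sum_k\lambda_k^{2s}|\langle x,\varphi_k\rangle|^2<\infty\}$, $A^sx=\sum_k\lambda_k^s\langle x,\varphi_k\rangle\varphi_k$, and $\|x\|_{s}:=\|x\|_{D(A^s)}=(\|x\|^2+\|A^sx\|^2)^{1/2}$. The solution $v$ is the unique mild (equivalently strict) solution in $C([0,T];D(A^{1/2}))\cap H^1(0,T;X)\cap L^2(0,T;D(A))$ of the stated Cauchy problem (the equation with source term $p(t)B\varphi_1\in L^2(0,T;X)$). *)

theory Defs
  imports "HOL-Analysis.Analysis"
begin

text \<open>Standing setting: a real separable Hilbert space is a type of class
  real_inner + complete_space + second_countable_topology.
  The spectral data (lam k, phi k), k = 0,1,2,... correspond to the paper's
  (lambda_(k+1), varphi_(k+1)).\<close>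

definition lin_op_on :: "'a::real_vector set \<Rightarrow> ('a \<Rightarrow> 'a) \<Rightarrow> bool" where
  "lin_op_on D A \<longleftrightarrow> subspace D \<and>
     (\<forall>x\<in>D. \<forall>y\<in>D. A (x + y) = A x + A y) \<and>
     (\<forall>c. \<forall>x\<in>D. A (c *\<^sub>R x) = c *\<^sub>R A x)"

text \<open>Densely defined self-adjoint operator: D dense, and the adjoint A* (domain
  {y. exists z. forall x in D. <Ax,y> = <x,z>}) coincides with A.\<close>
definition self_adjoint_op :: "'a::real_inner set \<Rightarrow> ('a \<Rightarrow> 'a) \<Rightarrow> bool" where
  "self_adjoint_op D A \<longleftrightarrow> lin_op_on D A \<and> closure D = UNIV \<and>
     (\<forall>y. (\<exists>z. \<forall>x\<in>D. inner (A x) y = inner x z) \<longleftrightarrow> y \<in> D) \<and>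
     (\<forall>x\<in>D. \<forall>y\<in>D. inner (A x) y = inner x (A y))"

definition compact_resolvent_at :: "'a::real_normed_vector set \<Rightarrow> ('a \<Rightarrow> 'a) \<Rightarrow> real \<Rightarrow> bool" where
  "compact_resolvent_at D A l \<longleftrightarrow>
     bij_betw (\<lambda>x. l *\<^sub>R x + A x) D UNIV \<and>
     (\<forall>S. bounded S \<longrightarrow> compact (closure (inv_into D (\<lambda>x. l *\<^sub>R x + A x) ` S)))"

text \<open>Fractional powers via the eigen-expansion (used for s > 0).\<close>
definition frac_dom :: "(nat \<Rightarrow> real) \<Rightarrow> (nat \<Rightarrow> 'a::real_inner) \<Rightarrow> real \<Rightarrow> 'a set" where
  "frac_dom lam phi s = {x. summable (\<lambda>k. (lam k powr (2 * s)) * (inner x (phi k)) ^ 2)}"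

definition frac_pow :: "(nat \<Rightarrow> real) \<Rightarrow> (nat \<Rightarrow> 'a::real_inner) \<Rightarrow> real \<Rightarrow> 'a \<Rightarrow> 'a" where
  "frac_pow lam phi s x = (\<Sum>k. (lam k powr s * inner x (phi k)) *\<^sub>R phi k)"

definition frac_norm :: "(nat \<Rightarrow> real) \<Rightarrow> (nat \<Rightarrow> 'a::real_inner) \<Rightarrow> real \<Rightarrow> 'a \<Rightarrow> real" where
  "frac_norm lam phi s x = sqrt ((norm x)\<^sup>2 + (norm (frac_pow lam phi s x))\<^sup>2)"

definition sgrp :: "(nat \<Rightarrow> real) \<Rightarrow> (nat \<Rightarrow> 'a::real_inner) \<Rightarrow> real \<Rightarrow> 'a \<Rightarrow> 'a" where
  "sgrp lam phi t x = (\<Sum>k. (exp (- lam k * t) * inner x (phi k)) *\<^sub>R phi k)"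

text \<open>v is the mild solution in C([0,T]; D(A^(1/2))) of
  v' + A v + p(t) B v + p(t) B phi_1 = 0, v(0) = v0.\<close>
definition mild_solution ::
  "(nat \<Rightarrow> real) \<Rightarrow> (nat \<Rightarrow> 'a::{real_inner,complete_space,second_countable_topology})
   \<Rightarrow> ('a \<Rightarrow> 'a) \<Rightarrow> real \<Rightarrow> 'a \<Rightarrow> (real \<Rightarrow> real) \<Rightarrow> (real \<Rightarrow> 'a) \<Rightarrow> bool" where
  "mild_solution lam phi B T v0 p v \<longleftrightarrow>
     (\<forall>t\<in>{0..T}. v t \<in> frac_dom lam phi (1/2)) \<and>
     (\<forall>t\<in>{0..T}. ((\<lambda>s. frac_norm lam phi (1/2) (v s - v t)) \<longlongrightarrow> 0) (at t within {0..T})) \<and>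
     (\<forall>t\<in>{0..T}.
        set_integrable lborel {0..t} (\<lambda>s. p s *\<^sub>R sgrp lam phi (t - s) (B (v s) + B (phi 0))) \<and>
        v t = sgrp lam phi t v0
              - (LINT s:{0..t}|lborel. p s *\<^sub>R sgrp lam phi (t - s) (B (v s) + B (phi 0))))"

end

theory Submission
  imports Defs "HOL-Analysis.Analysis"
begin


definition orthonormal_seq :: "(nat \<Rightarrow> 'a::real_inner) \<Rightarrow> bool" where
  "orthonormal_seq e \<longleftrightarrow> (\<forall>i j. inner (e i) (e j) = (if i = j then 1 else 0))"

lemma on_inner: "orthonormal_seq e \<Longrightarrow> inner (e i) (e j) = (if i = j then 1 else 0)"
  by (simp add: orthonormal_seq_def)

lemma inner_sum_coef:
  assumes "orthonormal_seq e" "finite F"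
  shows "inner (\<Sum>k\<in>F. c k *\<^sub>R e k) (e j) = (if j \<in> F then c j else 0)"
  using assms by (simp add: inner_sum_left on_inner if_distrib[of "\<lambda>x. c _ * x"] sum.delta' cong: if_cong)

lemma norm_sum_coef:
  assumes "orthonormal_seq e" "finite F"
  shows "(norm (\<Sum>k\<in>F. c k *\<^sub>R e k))\<^sup>2 = (\<Sum>k\<in>F. (c k)\<^sup>2)"
proof -
  have "(norm (\<Sum>k\<in>F. c k *\<^sub>R e k))\<^sup>2 = inner (\<Sum>k\<in>F. c k *\<^sub>R e k) (\<Sum>k\<in>F. c k *\<^sub>R e k)"
    by (simp add: power2_norm_eq_inner)
  also have "\<dots> = (\<Sum>j\<in>F. c j * inner (\<Sum>k\<in>F. c k *\<^sub>R e k) (e j))"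
    by (simp add: inner_sum_right)
  also have "\<dots> = (\<Sum>j\<in>F. (c j)\<^sup>2)"
    using assms by (intro sum.cong) (auto simp: inner_sum_coef power2_eq_square)
  finally show ?thesis .
qed

lemma bessel_partial:
  assumes "orthonormal_seq e" "finite F"
  shows "(\<Sum>k\<in>F. (inner x (e k))\<^sup>2) \<le> (norm x)\<^sup>2"
proof -
  define y where "y = (\<Sum>k\<in>F. inner x (e k) *\<^sub>R e k)"
  have xy: "inner x y = (\<Sum>k\<in>F. (inner x (e k))\<^sup>2)"
    by (simp add: y_def inner_sum_right power2_eq_square)
  have yy: "inner y y = (\<Sum>k\<in>F. (inner x (e k))\<^sup>2)"
    using norm_sum_coef[OF assms, of "\<lambda>k. inner x (e k)"] by (simp add: y_def power2_norm_eq_inner)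
  have "0 \<le> inner (x - y) (x - y)" by simp
  also have "\<dots> = inner x x - 2 * inner x y + inner y y"
    by (simp add: inner_diff_left inner_diff_right inner_commute)
  finally show ?thesis using xy yy by (simp add: power2_norm_eq_inner)
qed

lemma bessel_summable:
  assumes "orthonormal_seq e"
  shows "summable (\<lambda>k. (inner x (e k))\<^sup>2)"
  by (rule summableI_nonneg_bounded[where x="(norm x)\<^sup>2"])
     (auto intro: bessel_partial[OF assms])

lemma bessel:
  assumes "orthonormal_seq e"
  shows "(\<Sum>k. (inner x (e k))\<^sup>2) \<le> (norm x)\<^sup>2"
  by (rule suminf_le_const[OF bessel_summable[OF assms]])
     (auto intro: bessel_partial[OF assms])

lemma partial_diff:
  fixes f :: "nat \<Rightarrow> 'b::ab_group_add"
  assumes "m \<le> n"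
  shows "(\<Sum>k<n. f k) - (\<Sum>k<m. f k) = (\<Sum>k\<in>{m..<n}. f k)"
  using sum_diff_nat_ivl[of 0 m n f] assms by (simp add: lessThan_atLeast0)

lemma coef_summable:
  fixes e :: "nat \<Rightarrow> 'a::{real_inner,complete_space}"
  assumes "orthonormal_seq e" "summable (\<lambda>k. (c k)\<^sup>2)"
  shows "summable (\<lambda>k. c k *\<^sub>R e k)"
proof -
  define X where "X n = (\<Sum>k<n. c k *\<^sub>R e k)" for n
  have nd: "(norm (X n - X m))\<^sup>2 = \<bar>(\<Sum>k<n. (c k)\<^sup>2) - (\<Sum>k<m. (c k)\<^sup>2)\<bar>" for m n
  proof (cases "m \<le> n")
    case True
    then show ?thesis unfolding X_def
      by (simp add: partial_diff norm_sum_coef[OF assms(1)] sum_nonneg)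
  next
    case False
    then have "(norm (X m - X n))\<^sup>2 = \<bar>(\<Sum>k<m. (c k)\<^sup>2) - (\<Sum>k<n. (c k)\<^sup>2)\<bar>"
      unfolding X_def by (simp add: partial_diff norm_sum_coef[OF assms(1)] sum_nonneg)
    then show ?thesis by (simp add: norm_minus_commute abs_minus_commute)
  qed
  have C: "Cauchy (\<lambda>n. \<Sum>k<n. (c k)\<^sup>2)"
    using assms(2) by (simp add: summable_iff_convergent Cauchy_convergent_iff)
  have "Cauchy X"
  proof (unfold Cauchy_iff, intro allI impI)
    fix r :: real assume r: "r > 0"
    then obtain M where M: "\<And>m n. m \<ge> M \<Longrightarrow> n \<ge> M \<Longrightarrow> norm ((\<Sum>k<m. (c k)\<^sup>2) - (\<Sum>k<n. (c k)\<^sup>2)) < r\<^sup>2"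
      using C unfolding Cauchy_iff by (meson zero_less_power)
    have "norm (X m - X n) < r" if "m \<ge> M" "n \<ge> M" for m n
    proof -
      have "(norm (X m - X n))\<^sup>2 < r\<^sup>2" using M[OF that(2) that(1)] nd[of m n] by simp
      then show ?thesis using r by (smt (verit) power_mono norm_ge_zero)
    qed
    then show "\<exists>M. \<forall>m\<ge>M. \<forall>n\<ge>M. norm (X m - X n) < r" by blast
  qed
  then show ?thesis unfolding summable_iff_convergent X_def[abs_def]
    by (simp add: Cauchy_convergent_iff)
qed

lemma coef_inner:
  fixes e :: "nat \<Rightarrow> 'a::{real_inner,complete_space}"
  assumes "orthonormal_seq e" "summable (\<lambda>k. (c k)\<^sup>2)"
  shows "inner (\<Sum>k. c k *\<^sub>R e k) (e j) = c j"
proof -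
  have s: "summable (\<lambda>k. c k *\<^sub>R e k)" by (rule coef_summable[OF assms])
  have "(\<lambda>n. inner (\<Sum>k<n. c k *\<^sub>R e k) (e j)) \<longlonglongrightarrow> inner (\<Sum>k. c k *\<^sub>R e k) (e j)"
    by (intro tendsto_intros summable_LIMSEQ[OF s])
  moreover have "(\<lambda>n. inner (\<Sum>k<n. c k *\<^sub>R e k) (e j)) \<longlonglongrightarrow> c j"
  proof (rule tendsto_eventually)
    show "\<forall>\<^sub>F n in sequentially. inner (\<Sum>k<n. c k *\<^sub>R e k) (e j) = c j"
      using eventually_gt_at_top[of j]
      by eventually_elim (simp add: inner_sum_coef[OF assms(1)])
  qed
  ultimately show ?thesis by (rule LIMSEQ_unique)
qed

lemma coef_norm:
  fixes e :: "nat \<Rightarrow> 'a::{real_inner,complete_space}"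
  assumes "orthonormal_seq e" "summable (\<lambda>k. (c k)\<^sup>2)"
  shows "(norm (\<Sum>k. c k *\<^sub>R e k))\<^sup>2 = (\<Sum>k. (c k)\<^sup>2)"
proof -
  have s: "summable (\<lambda>k. c k *\<^sub>R e k)" by (rule coef_summable[OF assms])
  have "(\<lambda>n. (norm (\<Sum>k<n. c k *\<^sub>R e k))\<^sup>2) \<longlonglongrightarrow> (norm (\<Sum>k. c k *\<^sub>R e k))\<^sup>2"
    by (intro tendsto_intros summable_LIMSEQ[OF s])
  moreover have "(\<lambda>n. (norm (\<Sum>k<n. c k *\<^sub>R e k))\<^sup>2) = (\<lambda>n. \<Sum>k<n. (c k)\<^sup>2)"
    using norm_sum_coef[OF assms(1)] by simp
  ultimately have "(\<lambda>n. \<Sum>k<n. (c k)\<^sup>2) \<longlonglongrightarrow> (norm (\<Sum>k. c k *\<^sub>R e k))\<^sup>2" by simp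
  moreover have "(\<lambda>n. \<Sum>k<n. (c k)\<^sup>2) \<longlonglongrightarrow> (\<Sum>k. (c k)\<^sup>2)"
    by (rule summable_LIMSEQ[OF assms(2)])
  ultimately show ?thesis by (rule LIMSEQ_unique)
qed

lemma expansion:
  fixes e :: "nat \<Rightarrow> 'a::{real_inner,complete_space}"
  assumes on: "orthonormal_seq e" and basis: "closure (span (range e)) = UNIV"
  shows "x = (\<Sum>k. inner x (e k) *\<^sub>R e k)"
proof -
  define y where "y = (\<Sum>k. inner x (e k) *\<^sub>R e k)"
  have yk: "inner y (e j) = inner x (e j)" for j
    unfolding y_def by (rule coef_inner[OF on bessel_summable[OF on]])
  have "span (range e) \<subseteq> {z. inner (x - y) z = 0}"
  proof (rule span_minimal)
    show "range e \<subseteq> {z. inner (x - y) z = 0}" using yk by (auto simp: inner_diff_left)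
    show "subspace {z. inner (x - y) z = 0}"
      by (auto simp: subspace_def inner_add_right)
  qed
  moreover have "closed {z. inner (x - y) z = 0}"
    by (intro closed_Collect_eq continuous_intros)
  ultimately have "closure (span (range e)) \<subseteq> {z. inner (x - y) z = 0}"
    by (rule closure_minimal)
  then have "inner (x - y) (x - y) = 0" using basis by blast
  then show ?thesis by (simp add: y_def)
qed

lemma parseval:
  fixes e :: "nat \<Rightarrow> 'a::{real_inner,complete_space}"
  assumes on: "orthonormal_seq e" and basis: "closure (span (range e)) = UNIV"
  shows "(norm x)\<^sup>2 = (\<Sum>k. (inner x (e k))\<^sup>2)"
  using coef_norm[OF on bessel_summable[OF on], of x] expansion[OF on basis, of x]
  by simp


lemma dom_summable:
  assumes "\<forall>k. lam k \<ge> 0" "x \<in> frac_dom lam e (1/2)"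
  shows "summable (\<lambda>k. lam k * (inner x (e k))\<^sup>2)"
  using assms by (simp add: frac_dom_def)

lemma dom_iff:
  assumes "\<forall>k. lam k \<ge> 0"
  shows "x \<in> frac_dom lam e (1/2) \<longleftrightarrow> summable (\<lambda>k. lam k * (inner x (e k))\<^sup>2)"
  using assms by (simp add: frac_dom_def)

lemma frac_pow_eq:
  assumes "\<forall>k. lam k \<ge> 0"
  shows "frac_pow lam e (1/2) x = (\<Sum>k. (sqrt (lam k) * inner x (e k)) *\<^sub>R e k)"
  using assms by (simp add: frac_pow_def powr_half_sqrt)

lemma sq_coef: "lam \<ge> 0 \<Longrightarrow> (sqrt lam * a)\<^sup>2 = lam * a\<^sup>2"
  by (simp add: power_mult_distrib)

lemma frac_pow_summable:
  fixes e :: "nat \<Rightarrow> 'a::{real_inner,complete_space}"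
  assumes on: "orthonormal_seq e" and l: "\<forall>k. lam k \<ge> 0" and x: "x \<in> frac_dom lam e (1/2)"
  shows "summable (\<lambda>k. (sqrt (lam k) * inner x (e k)) *\<^sub>R e k)"
  by (rule coef_summable[OF on]) (use dom_summable[OF l x] l in \<open>simp add: sq_coef\<close>)

lemma frac_pow_norm:
  fixes e :: "nat \<Rightarrow> 'a::{real_inner,complete_space}"
  assumes on: "orthonormal_seq e" and l: "\<forall>k. lam k \<ge> 0" and x: "x \<in> frac_dom lam e (1/2)"
  shows "(norm (frac_pow lam e (1/2) x))\<^sup>2 = (\<Sum>k. lam k * (inner x (e k))\<^sup>2)"
  using coef_norm[OF on, of "\<lambda>k. sqrt (lam k) * inner x (e k)"] dom_summable[OF l x] l
  by (simp add: frac_pow_eq[OF l] sq_coef)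

lemma frac_norm_sq:
  fixes e :: "nat \<Rightarrow> 'a::{real_inner,complete_space}"
  assumes on: "orthonormal_seq e" and basis: "closure (span (range e)) = UNIV"
    and l: "\<forall>k. lam k \<ge> 0" and x: "x \<in> frac_dom lam e (1/2)"
  shows "(frac_norm lam e (1/2) x)\<^sup>2 = (\<Sum>k. (1 + lam k) * (inner x (e k))\<^sup>2)"
proof -
  have "(frac_norm lam e (1/2) x)\<^sup>2 = (norm x)\<^sup>2 + (norm (frac_pow lam e (1/2) x))\<^sup>2"
    by (simp add: frac_norm_def)
  also have "\<dots> = (\<Sum>k. (inner x (e k))\<^sup>2) + (\<Sum>k. lam k * (inner x (e k))\<^sup>2)"
    by (simp add: parseval[OF on basis, of x] frac_pow_norm[OF on l x])
  also have "\<dots> = (\<Sum>k. (inner x (e k))\<^sup>2 + lam k * (inner x (e k))\<^sup>2)"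
    by (rule suminf_add[OF bessel_summable[OF on] dom_summable[OF l x]])
  also have "\<dots> = (\<Sum>k. (1 + lam k) * (inner x (e k))\<^sup>2)"
    by (simp add: algebra_simps)
  finally show ?thesis .
qed

lemma frac_norm_sums:
  fixes e :: "nat \<Rightarrow> 'a::{real_inner,complete_space}"
  assumes on: "orthonormal_seq e" and basis: "closure (span (range e)) = UNIV"
    and l: "\<forall>k. lam k \<ge> 0" and x: "x \<in> frac_dom lam e (1/2)"
  shows "(\<lambda>k. (1 + lam k) * (inner x (e k))\<^sup>2) sums (frac_norm lam e (1/2) x)\<^sup>2"
proof -
  have "summable (\<lambda>k. (inner x (e k))\<^sup>2 + lam k * (inner x (e k))\<^sup>2)"
    by (rule summable_add[OF bessel_summable[OF on] dom_summable[OF l x]])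
  then have "summable (\<lambda>k. (1 + lam k) * (inner x (e k))\<^sup>2)" by (simp add: algebra_simps)
  then show ?thesis using frac_norm_sq[OF on basis l x] by (simp add: summable_sums)
qed

lemma dom_diff:
  assumes l: "\<forall>k. lam k \<ge> 0" and x: "x \<in> frac_dom lam e (1/2)" and y: "y \<in> frac_dom lam e (1/2)"
  shows "x - y \<in> frac_dom lam e (1/2)"
proof -
  have s: "summable (\<lambda>k. 2 * (lam k * (inner x (e k))\<^sup>2) + 2 * (lam k * (inner y (e k))\<^sup>2))"
    by (intro summable_add summable_mult dom_summable[OF l x] dom_summable[OF l y])
  have "summable (\<lambda>k. lam k * (inner (x - y) (e k))\<^sup>2)"
  proof (rule summable_comparison_test'[OF s])
    fix k
    have "(inner x (e k) - inner y (e k))\<^sup>2 \<le> 2 * (inner x (e k))\<^sup>2 + 2 * (inner y (e k))\<^sup>2"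
    proof -
      have "0 \<le> (inner x (e k) + inner y (e k))\<^sup>2" by simp
      then show ?thesis by (simp add: power2_diff power2_sum)
    qed
    then have "lam k * (inner x (e k) - inner y (e k))\<^sup>2 \<le> lam k * (2 * (inner x (e k))\<^sup>2 + 2 * (inner y (e k))\<^sup>2)"
      using l by (intro mult_left_mono) auto
    then show "norm (lam k * (inner (x - y) (e k))\<^sup>2) \<le> 2 * (lam k * (inner x (e k))\<^sup>2) + 2 * (lam k * (inner y (e k))\<^sup>2)"
      using l by (simp add: inner_diff_left algebra_simps)
  qed
  then show ?thesis using l by (simp add: dom_iff)
qed

lemma frac_pow_diff:
  fixes e :: "nat \<Rightarrow> 'a::{real_inner,complete_space}"
  assumes on: "orthonormal_seq e" and l: "\<forall>k. lam k \<ge> 0"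
    and x: "x \<in> frac_dom lam e (1/2)" and y: "y \<in> frac_dom lam e (1/2)"
  shows "frac_pow lam e (1/2) (x - y) = frac_pow lam e (1/2) x - frac_pow lam e (1/2) y"
  unfolding frac_pow_eq[OF l]
  using suminf_diff[OF frac_pow_summable[OF on l x] frac_pow_summable[OF on l y]]
  by (simp add: inner_diff_left algebra_simps scaleR_diff_left)

lemma frac_norm_pair: "frac_norm lam e s x = norm (x, frac_pow lam e s x)"
  by (simp add: frac_norm_def norm_Pair)

lemma frac_norm_ge: "norm x \<le> frac_norm lam e s x"
  by (simp add: frac_norm_def real_le_rsqrt)

lemma frac_norm_nonneg: "0 \<le> frac_norm lam e s x"
  by (simp add: frac_norm_def)

lemma frac_norm_lip:
  fixes e :: "nat \<Rightarrow> 'a::{real_inner,complete_space}"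
  assumes on: "orthonormal_seq e" and l: "\<forall>k. lam k \<ge> 0"
    and x: "x \<in> frac_dom lam e (1/2)" and y: "y \<in> frac_dom lam e (1/2)"
  shows "\<bar>frac_norm lam e (1/2) x - frac_norm lam e (1/2) y\<bar> \<le> frac_norm lam e (1/2) (x - y)"
proof -
  have "frac_norm lam e (1/2) (x - y) = norm ((x, frac_pow lam e (1/2) x) - (y, frac_pow lam e (1/2) y))"
    by (simp add: frac_norm_pair frac_pow_diff[OF on l x y])
  then show ?thesis unfolding frac_norm_pair by (metis norm_triangle_ineq3)
qed

lemma e_dom:
  assumes on: "orthonormal_seq e" and l: "\<forall>k. lam k \<ge> 0"
  shows "e j \<in> frac_dom lam e (1/2)"
proof -
  have "(\<lambda>k. lam k * (inner (e j) (e k))\<^sup>2) = (\<lambda>k. if k = j then lam j else 0)"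
    using on by (auto simp: on_inner)
  then show ?thesis using l by (simp add: dom_iff summable_single)
qed

lemma e_frac_norm:
  fixes e :: "nat \<Rightarrow> 'a::{real_inner,complete_space}"
  assumes on: "orthonormal_seq e" and basis: "closure (span (range e)) = UNIV"
    and l: "\<forall>k. lam k \<ge> 0"
  shows "(frac_norm lam e (1/2) (e j))\<^sup>2 = 1 + lam j"
proof -
  have "(\<lambda>k. (1 + lam k) * (inner (e j) (e k))\<^sup>2) = (\<lambda>k. if k = j then 1 + lam j else 0)"
    using on by (auto simp: on_inner)
  then show ?thesis using frac_norm_sq[OF on basis l e_dom[OF on l]]
    using sums_single[of j "\<lambda>k. 1 + lam j"] by (simp add: sums_iff)
qed

lemma sgrp_inner:
  fixes e :: "nat \<Rightarrow> 'a::{real_inner,complete_space}"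
  assumes on: "orthonormal_seq e" and l: "\<forall>k. lam k \<ge> 0" and t: "t \<ge> 0"
  shows "inner (sgrp lam e t x) (e j) = exp (- lam j * t) * inner x (e j)"
proof -
  have "summable (\<lambda>k. (exp (- lam k * t) * inner x (e k))\<^sup>2)"
  proof (rule summable_comparison_test'[OF bessel_summable[OF on, of x]])
    fix k
    have "exp (- lam k * t) \<le> 1" using l t by (simp add: mult_nonneg_nonneg)
    then have "(exp (- lam k * t))\<^sup>2 \<le> 1" by (simp add: power_le_one)
    then show "norm ((exp (- lam k * t) * inner x (e k))\<^sup>2) \<le> (inner x (e k))\<^sup>2"
      by (simp add: power_mult_distrib mult_left_le_one_le)
  qed
  then show ?thesis unfolding sgrp_def by (rule coef_inner[OF on])
qed


lemma le_sum_of_sq_le: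
  fixes a b c :: real
  assumes "0 \<le> a" "0 \<le> b" "0 \<le> c" "c\<^sup>2 \<le> 4 * a * b"
  shows "c \<le> a + b"
proof -
  have id: "(a + b)\<^sup>2 - 4 * a * b = (a - b)\<^sup>2" by (simp add: power2_eq_square algebra_simps)
  have "0 \<le> (a - b)\<^sup>2" by (rule zero_le_power2)
  then have "c\<^sup>2 \<le> (a + b)\<^sup>2" using assms(4) id by linarith
  moreover have "0 \<le> a + b" using assms(1,2) by linarith
  ultimately show ?thesis by (rule power2_le_imp_le)
qed

lemma mode_step:
  fixes lam E x J U eta D :: real
  assumes l: "lam \<ge> 0" and E0: "0 \<le> E" and E1: "E \<le> 1" and cs: "J\<^sup>2 \<le> U * eta"
    and q: "2 * lam * U = 1 - E\<^sup>2" and UD: "U \<le> D" and U0: "0 \<le> U" and eta: "0 \<le> eta"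
  shows "(1 + lam) * (E * x - J)\<^sup>2 \<le> (1 + lam) * x\<^sup>2 + 2 * \<bar>x\<bar> * \<bar>J\<bar> + (1/2 + D) * eta"
proof -
  have expand: "(1 + lam) * (E * x - J)\<^sup>2 = (1 + lam) * E\<^sup>2 * x\<^sup>2 - 2 * E * x * J - 2 * lam * E * x * J + (1 + lam) * J\<^sup>2"
    by (simp add: power2_diff power_mult_distrib algebra_simps)
  have t1: "- 2 * E * x * J \<le> 2 * \<bar>x\<bar> * \<bar>J\<bar>"
  proof -
    have "\<bar>E * x * J\<bar> \<le> \<bar>x\<bar> * \<bar>J\<bar>"
      using E0 E1 by (simp add: abs_mult mult_left_le_one_le mult.assoc)
    then show ?thesis by linarith
  qed
  have t2: "- 2 * lam * E * x * J \<le> lam * (1 - E\<^sup>2) * x\<^sup>2 + E\<^sup>2 * eta / 2"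
  proof -
    have "2 * lam * E * \<bar>x\<bar> * \<bar>J\<bar> \<le> lam * (1 - E\<^sup>2) * x\<^sup>2 + E\<^sup>2 * eta / 2"
    proof (rule le_sum_of_sq_le)
      show "0 \<le> lam * (1 - E\<^sup>2) * x\<^sup>2" using l E0 E1 by (simp add: power_le_one)
      show "0 \<le> E\<^sup>2 * eta / 2" using eta by simp
      show "0 \<le> 2 * lam * E * \<bar>x\<bar> * \<bar>J\<bar>" using l E0 by simp
      have "(2 * lam * E * \<bar>x\<bar> * \<bar>J\<bar>)\<^sup>2 = 4 * lam\<^sup>2 * E\<^sup>2 * x\<^sup>2 * J\<^sup>2"
        by (simp add: power_mult_distrib)
      also have "\<dots> \<le> 4 * lam\<^sup>2 * E\<^sup>2 * x\<^sup>2 * (U * eta)"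
        using cs by (intro mult_left_mono) auto
      also have "\<dots> = 4 * (lam * (2 * lam * U) * x\<^sup>2) * (E\<^sup>2 * eta / 2)"
        by (simp add: power2_eq_square algebra_simps)
      also have "\<dots> = 4 * (lam * (1 - E\<^sup>2) * x\<^sup>2) * (E\<^sup>2 * eta / 2)"
        by (simp only: q)
      finally show "(2 * lam * E * \<bar>x\<bar> * \<bar>J\<bar>)\<^sup>2 \<le> 4 * (lam * (1 - E\<^sup>2) * x\<^sup>2) * (E\<^sup>2 * eta / 2)" .
    qed
    moreover have "\<bar>lam * E * x * J\<bar> = lam * E * \<bar>x\<bar> * \<bar>J\<bar>"
      using l E0 by (simp add: abs_mult)
    ultimately show ?thesis by linarith
  qed
  have t3: "(1 + lam) * J\<^sup>2 \<le> U * eta + (1 - E\<^sup>2) / 2 * eta"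
  proof -
    have "(1 + lam) * J\<^sup>2 \<le> (1 + lam) * (U * eta)" using cs l by (intro mult_left_mono) auto
    also have "\<dots> = U * eta + (2 * lam * U) / 2 * eta" by (simp add: algebra_simps)
    finally show ?thesis by (simp only: q)
  qed
  have t4: "U * eta \<le> D * eta" using UD eta by (rule mult_right_mono)
  have t5: "(1 + lam) * E\<^sup>2 * x\<^sup>2 + lam * (1 - E\<^sup>2) * x\<^sup>2 \<le> (1 + lam) * x\<^sup>2"
  proof -
    have "(1 + lam) * E\<^sup>2 * x\<^sup>2 + lam * (1 - E\<^sup>2) * x\<^sup>2 = (1 + lam) * x\<^sup>2 - (1 - E\<^sup>2) * x\<^sup>2"
      by (simp add: algebra_simps)
    moreover have "0 \<le> (1 - E\<^sup>2) * x\<^sup>2" using E0 E1 by (simp add: power_le_one)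
    ultimately show ?thesis by linarith
  qed
  have i1: "E\<^sup>2 * eta / 2 + (1 - E\<^sup>2) / 2 * eta = eta / 2" by (simp add: field_simps)
  have i2: "(1/2 + D) * eta = eta / 2 + D * eta" by (simp add: field_simps)
  show ?thesis using expand t1 t2 t3 t4 t5 i1 i2 by linarith
qed


lemma set_integral_nonneg':
  fixes f :: "'a \<Rightarrow> real"
  assumes "\<And>x. x \<in> A \<Longrightarrow> 0 \<le> f x"
  shows "0 \<le> (LINT x:A|M. f x)"
  unfolding set_lebesgue_integral_def
  using assms by (intro Bochner_Integration.integral_nonneg) (auto simp: indicator_def)

lemma set_cs:
  fixes f u :: "'a \<Rightarrow> real"
  assumes f2: "set_integrable M A (\<lambda>r. (f r)\<^sup>2)" and u2: "set_integrable M A (\<lambda>r. (u r)\<^sup>2)"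
    and fu: "set_integrable M A (\<lambda>r. f r * u r)"
  shows "(LINT r:A|M. f r * u r)\<^sup>2 \<le> (LINT r:A|M. (f r)\<^sup>2) * (LINT r:A|M. (u r)\<^sup>2)"
proof -
  define F where "F = (LINT r:A|M. (f r)\<^sup>2)"
  define U where "U = (LINT r:A|M. (u r)\<^sup>2)"
  define J where "J = (LINT r:A|M. f r * u r)"
  have quad: "0 \<le> a\<^sup>2 * U - 2 * a * J + F" for a
  proof -
    have i1: "set_integrable M A (\<lambda>r. a\<^sup>2 * (u r)\<^sup>2)" using u2 by simp
    have i2: "set_integrable M A (\<lambda>r. 2 * a * (f r * u r))" using fu by simp
    have "0 \<le> (LINT r:A|M. (a * u r - f r)\<^sup>2)" by (rule set_integral_nonneg') simp
    also have "(LINT r:A|M. (a * u r - f r)\<^sup>2) = (LINT r:A|M. a\<^sup>2 * (u r)\<^sup>2 - 2 * a * (f r * u r) + (f r)\<^sup>2)"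
      by (simp add: power2_diff power_mult_distrib algebra_simps)
    also have "\<dots> = (LINT r:A|M. a\<^sup>2 * (u r)\<^sup>2 - 2 * a * (f r * u r)) + F"
      unfolding F_def by (rule set_integral_add(2)[OF set_integral_diff(1)[OF i1 i2] f2])
    also have "(LINT r:A|M. a\<^sup>2 * (u r)\<^sup>2 - 2 * a * (f r * u r)) = a\<^sup>2 * U - 2 * a * J"
      unfolding U_def J_def by (subst set_integral_diff(2)[OF i1 i2]) simp
    finally show ?thesis .
  qed
  have U0: "0 \<le> U" unfolding U_def by (rule set_integral_nonneg') simp
  show ?thesis
  proof (cases "U = 0")
    case True
    have "J = 0"
    proof (rule ccontr)
      assume "J \<noteq> 0"
      have "0 \<le> ((F + 1) / (2 * J))\<^sup>2 * U - 2 * ((F + 1) / (2 * J)) * J + F" by (rule quad)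
      then show False using True \<open>J \<noteq> 0\<close> by (simp add: field_simps)
    qed
    then show ?thesis using True by (simp add: J_def[symmetric] U_def[symmetric])
  next
    case False
    then have Upos: "U > 0" using U0 by simp
    have "0 \<le> (J / U)\<^sup>2 * U - 2 * (J / U) * J + F" by (rule quad)
    then have "0 \<le> F - J\<^sup>2 / U" using Upos by (simp add: power2_eq_square field_simps)
    then have "J\<^sup>2 \<le> F * U" using Upos by (simp add: field_simps)
    then show ?thesis by (simp add: J_def F_def U_def)
  qed
qed

lemma exp_integral:
  fixes lam s t :: real
  assumes l: "lam \<ge> 0" and st: "s \<le> t"
  shows "2 * lam * (LINT r:{s<..t}|lborel. (exp (- lam * (t - r)))\<^sup>2) = 1 - (exp (- lam * (t - s)))\<^sup>2"
    and "(LINT r:{s<..t}|lborel. (exp (- lam * (t - r)))\<^sup>2) \<le> t - s"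
    and "0 \<le> (LINT r:{s<..t}|lborel. (exp (- lam * (t - r)))\<^sup>2)"
    and "set_integrable lborel {s<..t} (\<lambda>r. (exp (- lam * (t - r)))\<^sup>2)"
proof -
  have sq: "(exp (- lam * (t - r)))\<^sup>2 = exp (2 * lam * r - 2 * lam * t)" for r
    by (simp add: power2_eq_square mult_exp_exp algebra_simps)
  have int: "set_integrable lborel {s..t} (\<lambda>r. (exp (- lam * (t - r)))\<^sup>2)"
    by (intro borel_integrable_atLeastAtMost' continuous_intros)
  then show int2: "set_integrable lborel {s<..t} (\<lambda>r. (exp (- lam * (t - r)))\<^sup>2)"
    by (rule set_integrable_subset) auto
  show "0 \<le> (LINT r:{s<..t}|lborel. (exp (- lam * (t - r)))\<^sup>2)"
    by (rule set_integral_nonneg') simp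
  have "(LINT r:{s<..t}|lborel. (exp (- lam * (t - r)))\<^sup>2) \<le> (LINT r:{s<..t}|lborel. 1)"
  proof (rule set_integral_mono[OF int2])
    show "set_integrable lborel {s<..t} (\<lambda>r. 1::real)"
      by (rule set_integrable_subset[OF borel_integrable_atLeastAtMost'[where a=s and b=t, OF continuous_on_const]]) auto
    fix r assume "r \<in> {s<..t}"
    then have "exp (- lam * (t - r)) \<le> 1" using l by (simp add: mult_nonneg_nonneg)
    then show "(exp (- lam * (t - r)))\<^sup>2 \<le> 1" by (simp add: power_le_one)
  qed
  also have "(LINT r:{s<..t}|lborel. (1::real)) = t - s"
    using st by (subst set_integral_const) auto
  finally show "(LINT r:{s<..t}|lborel. (exp (- lam * (t - r)))\<^sup>2) \<le> t - s" .
  show "2 * lam * (LINT r:{s<..t}|lborel. (exp (- lam * (t - r)))\<^sup>2) = 1 - (exp (- lam * (t - s)))\<^sup>2"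
  proof (cases "lam = 0")
    case True then show ?thesis by simp
  next
    case False
    then have lp: "lam > 0" using l by simp
    have "(LBINT r=s..t. exp (2 * lam * r - 2 * lam * t)) = exp (2 * lam * t - 2 * lam * t) / (2 * lam) - exp (2 * lam * s - 2 * lam * t) / (2 * lam)"
    proof (rule interval_integral_FTC_finite)
      show "continuous_on {min s t..max s t} (\<lambda>r. exp (2 * lam * r - 2 * lam * t))"
        by (intro continuous_intros)
      fix x
      show "((\<lambda>r. exp (2 * lam * r - 2 * lam * t) / (2 * lam)) has_vector_derivative exp (2 * lam * x - 2 * lam * t)) (at x within {min s t..max s t})"
        using lp by (auto intro!: derivative_eq_intros simp: has_real_derivative_iff_has_vector_derivative[symmetric])
    qed
    moreover have "(LBINT r=s..t. exp (2 * lam * r - 2 * lam * t)) = (LINT r:{s<..t}|lborel. (exp (- lam * (t - r)))\<^sup>2)"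
      unfolding sq using st by (rule interval_integral_Ioc)
    ultimately have "(LINT r:{s<..t}|lborel. (exp (- lam * (t - r)))\<^sup>2) = (1 - exp (2 * lam * s - 2 * lam * t)) / (2 * lam)"
      by (simp add: diff_divide_distrib)
    then show ?thesis using lp unfolding sq by simp
  qed
qed


lemma le_sum_of_sq_le':
  fixes a b c :: real
  assumes "0 \<le> a" "0 \<le> b" "0 \<le> c" "c\<^sup>2 \<le> 4 * a * b"
  shows "c \<le> a + b"
proof -
  have id: "(a + b)\<^sup>2 - 4 * a * b = (a - b)\<^sup>2" by (simp add: power2_eq_square algebra_simps)
  have "0 \<le> (a - b)\<^sup>2" by (rule zero_le_power2)
  then have "c\<^sup>2 \<le> (a + b)\<^sup>2" using assms(4) id by linarith
  moreover have "0 \<le> a + b" using assms(1,2) by linarith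
  ultimately show ?thesis by (rule power2_le_imp_le)
qed

lemma conv_step:
  fixes a a' b b' d :: real
  assumes a0: "0 \<le> a" and aa: "a \<le> a'" and b1: "1 \<le> b" and bd: "b' = b * exp d" and d0: "0 \<le> d"
  shows "a' * b' - a * b \<ge> (a' - a) + a * b * d"
proof -
  have ed: "exp d \<ge> 1 + d" by (rule exp_ge_add_one_self)
  have "b * (1 + d) \<le> b * exp d" by (rule mult_left_mono) (use ed b1 in auto)
  then have bb: "b' \<ge> b + b * d" using bd by (simp add: algebra_simps)
  have "b * d \<ge> 0" using b1 d0 by simp
  then have b'1: "b' \<ge> 1" using bb b1 by linarith
  have e1: "a' - a \<le> (a' - a) * b'" using mult_left_mono[OF b'1, of "a' - a"] aa by simp
  have e2: "a * (b * d) \<le> a * (b' - b)" by (rule mult_left_mono) (use bb a0 in auto)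
  have e3: "a' * b' - a * b = (a' - a) * b' + a * (b' - b)" by (simp add: algebra_simps)
  have e4: "a * (b * d) = a * b * d" by simp
  show ?thesis using e1 e2 e3 e4 by linarith
qed


lemma gronwall_fail:
  fixes z I1 I2 :: "real \<Rightarrow> real" and T C c eps :: real
  assumes C: "C \<ge> 0" and c: "c \<ge> 0" and eps: "0 < eps"
    and zc: "continuous_on {0..T} z" and z0: "\<forall>t\<in>{0..T}. z t \<ge> 0"
    and I1c: "continuous_on {0..T} I1" and I2c: "continuous_on {0..T} I2"
    and I10: "I1 0 = 0" and I20: "I2 0 = 0"
    and mono: "\<And>s t. 0 \<le> s \<Longrightarrow> s \<le> t \<Longrightarrow> t \<le> T \<Longrightarrow> I1 s \<le> I1 t \<and> I2 s \<le> I2 t"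
    and cs: "\<And>s t. 0 \<le> s \<Longrightarrow> s \<le> t \<Longrightarrow> t \<le> T \<Longrightarrow> (I1 t - I1 s)\<^sup>2 \<le> (t - s) * (I2 t - I2 s)"
    and step: "\<And>s t M. 0 \<le> s \<Longrightarrow> s \<le> t \<Longrightarrow> t \<le> T \<Longrightarrow> (\<forall>r\<in>{s..t}. z r \<le> M) \<Longrightarrow>
       (z t)\<^sup>2 \<le> (z s)\<^sup>2 + 2 * z s * C * (M + c) * (I1 t - I1 s)
          + (1/2 + (t - s)) * C\<^sup>2 * (M + c)\<^sup>2 * (I2 t - I2 s)"
  defines "L \<equiv> \<lambda>t. 2 * C * I1 t + t + C\<^sup>2 * I2 t"
  defines "Phi \<equiv> \<lambda>t. ((z 0)\<^sup>2 + eps + (1 + eps) * (2 * C\<^sup>2 * c\<^sup>2 * I2 t)) * exp ((1 + eps) * L t)"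
  shows "\<forall>t\<in>{0..T}. (z t)\<^sup>2 < Phi t"
proof (rule ccontr)
  assume nt: "\<not> (\<forall>t\<in>{0..T}. (z t)\<^sup>2 < Phi t)"
  define F where "F = {0..T} \<inter> (\<lambda>t. (z t)\<^sup>2 - Phi t) -` {0..}"
  have Phic: "continuous_on {0..T} Phi"
    unfolding Phi_def L_def by (intro continuous_intros I1c I2c)
  have Dc: "continuous_on {0..T} (\<lambda>t. (z t)\<^sup>2 - Phi t)"
    by (intro continuous_intros zc Phic)
  have Fne: "F \<noteq> {}" using nt by (auto simp: F_def not_less)
  have Fcl: "closed F" unfolding F_def by (intro continuous_closed_preimage Dc) auto
  have Fbd: "bdd_below F" unfolding F_def by (auto intro: bdd_belowI[where m=0])
  define ts where "ts = Inf F"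
  have tsF: "ts \<in> F" unfolding ts_def by (rule closed_contains_Inf[OF Fne Fbd Fcl])
  have ts0: "0 \<le> ts" "ts \<le> T" using tsF by (auto simp: F_def)
  have below: "(z r)\<^sup>2 < Phi r" if "0 \<le> r" "r < ts" for r
  proof (rule ccontr)
    assume "\<not> (z r)\<^sup>2 < Phi r"
    then have "r \<in> F" using that ts0 by (auto simp: F_def)
    then have "ts \<le> r" unfolding ts_def by (rule cInf_lower[OF _ Fbd])
    then show False using that by simp
  qed
  have Phi0: "Phi 0 = (z 0)\<^sup>2 + eps" by (simp add: Phi_def L_def I10 I20)
  have ts_pos: "ts > 0"
  proof (rule ccontr)
    assume "\<not> ts > 0"
    then have "ts = 0" using ts0 by simp
    then show False using tsF eps by (auto simp: F_def Phi0)
  qed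
  have Lmono: "L s \<le> L t" if "0 \<le> s" "s \<le> t" "t \<le> T" for s t
  proof -
    have "2 * C * I1 s \<le> 2 * C * I1 t" by (rule mult_left_mono) (use mono[OF that] C in auto)
    moreover have "C\<^sup>2 * I2 s \<le> C\<^sup>2 * I2 t" by (rule mult_left_mono) (use mono[OF that] in auto)
    ultimately show ?thesis unfolding L_def using that by linarith
  qed
  have Lnn: "0 \<le> L t" if "0 \<le> t" "t \<le> T" for t
    using Lmono[of 0 t] that by (simp add: L_def I10 I20)
  have I2nn: "0 \<le> I2 t" if "0 \<le> t" "t \<le> T" for t
    using mono[of 0 t] that by (simp add: I20)
  have Gnn: "0 \<le> (z 0)\<^sup>2 + eps + (1 + eps) * (2 * C\<^sup>2 * c\<^sup>2 * I2 t)" if "0 \<le> t" "t \<le> T" for t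
    using I2nn[OF that] eps by (intro add_nonneg_nonneg mult_nonneg_nonneg) auto
  have Phimono: "Phi s \<le> Phi t" if "0 \<le> s" "s \<le> t" "t \<le> T" for s t
    unfolding Phi_def
  proof (rule mult_mono)
    show "(z 0)\<^sup>2 + eps + (1 + eps) * (2 * C\<^sup>2 * c\<^sup>2 * I2 s) \<le> (z 0)\<^sup>2 + eps + (1 + eps) * (2 * C\<^sup>2 * c\<^sup>2 * I2 t)"
    proof -
      have "2 * C\<^sup>2 * c\<^sup>2 * I2 s \<le> 2 * C\<^sup>2 * c\<^sup>2 * I2 t" by (rule mult_left_mono) (use mono[OF that] in auto)
      then have "(1 + eps) * (2 * C\<^sup>2 * c\<^sup>2 * I2 s) \<le> (1 + eps) * (2 * C\<^sup>2 * c\<^sup>2 * I2 t)"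
        by (rule mult_left_mono) (use eps in auto)
      then show ?thesis by linarith
    qed
    show "exp ((1 + eps) * L s) \<le> exp ((1 + eps) * L t)"
    proof -
      have "(1 + eps) * L s \<le> (1 + eps) * L t" by (rule mult_left_mono) (use Lmono[OF that] eps in auto)
      then show ?thesis by simp
    qed
  qed (use Gnn that in auto)
  have Phipos: "Phi t > 0" if "0 \<le> t" "t \<le> T" for t
  proof -
    have "0 < (z 0)\<^sup>2 + eps + (1 + eps) * (2 * C\<^sup>2 * c\<^sup>2 * I2 t)"
      using I2nn[OF that] eps by (intro add_pos_nonneg add_nonneg_pos mult_nonneg_nonneg) auto
    then show ?thesis unfolding Phi_def by simp
  qed
  define phi where "phi = Phi ts"
  have phipos: "phi > 0" unfolding phi_def using Phipos ts0 by simp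
    have zts: "(z ts)\<^sup>2 = phi"
  proof -
    have ge: "(z ts)\<^sup>2 \<ge> phi" using tsF by (simp add: F_def phi_def)
    have "\<not> (z ts)\<^sup>2 > phi"
    proof
      assume gt: "(z ts)\<^sup>2 > phi"
      define d0 where "d0 = (z ts)\<^sup>2 - Phi ts"
      have "d0 > 0" using gt by (simp add: d0_def phi_def)
      have tsin: "ts \<in> {0..T}" using ts0 by simp
      obtain d where d: "d > 0" and dd: "\<And>r. r \<in> {0..T} \<Longrightarrow> dist r ts < d \<Longrightarrow>
          dist ((z r)\<^sup>2 - Phi r) ((z ts)\<^sup>2 - Phi ts) < d0"
        using continuous_on_iff[THEN iffD1, OF Dc, rule_format, OF tsin \<open>d0 > 0\<close>] by blast
      define r where "r = max 0 (ts - d / 2)"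
      have r: "0 \<le> r" "r < ts" "r \<in> {0..T}" "dist r ts < d"
        using d ts_pos ts0 by (auto simp: r_def dist_real_def)
      have "(z r)\<^sup>2 - Phi r > 0" using dd[OF r(3) r(4)] by (simp add: dist_real_def d0_def)
      then show False using below[OF r(1) r(2)] by simp
    qed
    then show ?thesis using ge by simp
  qed
    define e0 where "e0 = phi * eps / (2 * (1 + eps))"
  have e0pos: "e0 > 0" unfolding e0_def using phipos eps by simp
  have tsin: "ts \<in> {0..T}" using ts0 by simp
  obtain d where d: "d > 0" and dd: "\<And>r. r \<in> {0..T} \<Longrightarrow> dist r ts < d \<Longrightarrow> dist (Phi r) (Phi ts) < e0"
    using continuous_on_iff[THEN iffD1, OF Phic, rule_format, OF tsin e0pos] by blast
  define m where "m = min (d / 2) (eps / 4)"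
  have m: "0 < m" "m \<le> d / 2" "m \<le> eps / 4" using d eps by (auto simp: m_def)
  define s where "s = max 0 (ts - m)"
  have s1: "ts - m \<le> s" "0 \<le> s" "s < ts" unfolding s_def using m ts_pos by auto
  have s: "0 \<le> s" "s < ts" "s \<in> {0..T}" "dist s ts < d" "ts - s \<le> eps / 4"
    using s1 m ts0 d by (auto simp: dist_real_def)
  define Dl where "Dl = ts - s"
  have Dl: "0 < Dl" "Dl \<le> eps / 4" using s by (auto simp: Dl_def)
  have Phis: "Phi s > phi - e0" using dd[OF s(3) s(4)] by (simp add: dist_real_def phi_def)
  have key: "(1 + 2 * Dl) * phi \<le> (1 + eps) * Phi s"
  proof -
    have "(1 + 2 * Dl) * phi \<le> (1 + eps / 2) * phi" by (rule mult_right_mono) (use Dl phipos in auto)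
    also have "\<dots> = (1 + eps) * (phi - e0)" unfolding e0_def using eps by (simp add: field_simps)
    also have "\<dots> \<le> (1 + eps) * Phi s" by (rule mult_left_mono) (use Phis eps in auto)
    finally show ?thesis .
  qed
  have "phi \<le> (1 + 2 * Dl) * phi" using Dl phipos by simp
  then have key1: "phi \<le> (1 + eps) * Phi s" using key by linarith
  define M where "M = sqrt phi"
  have M0: "M \<ge> 0" and MM: "M\<^sup>2 = phi" using phipos by (auto simp: M_def)
  have zM: "\<forall>r\<in>{s..ts}. z r \<le> M"
  proof
    fix r assume r: "r \<in> {s..ts}"
    have "(z r)\<^sup>2 \<le> phi"
    proof (cases "r = ts")
      case True then show ?thesis using zts by simp
    next
      case False
      then have "(z r)\<^sup>2 < Phi r" using r s by (intro below) auto
      also have "Phi r \<le> phi" unfolding phi_def using r s ts0 by (intro Phimono) auto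
      finally show ?thesis by simp
    qed
    then show "z r \<le> M" unfolding M_def using real_le_rsqrt by blast
  qed
  define P1 where "P1 = I1 ts - I1 s"
  define P2 where "P2 = I2 ts - I2 s"
  have P1: "P1 \<ge> 0" and P2: "P2 \<ge> 0" using mono[of s ts] s ts0 by (auto simp: P1_def P2_def)
  have csP: "P1\<^sup>2 \<le> Dl * P2" using cs[of s ts] s ts0 by (simp add: P1_def P2_def Dl_def)
  have zs: "0 \<le> z s" "z s \<le> M" using z0 s zM ts0 by auto
  have zs2: "(z s)\<^sup>2 < Phi s" using below s by simp
  have st: "phi \<le> (z s)\<^sup>2 + 2 * z s * C * (M + c) * P1 + (1/2 + Dl) * C\<^sup>2 * (M + c)\<^sup>2 * P2"
    using step[of s ts M] s ts0 zM zts by (simp add: P1_def P2_def Dl_def)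
  have b1: "2 * z s * C * (M + c) * P1 \<le> 2 * M * C * (M + c) * P1"
  proof -
    have X: "0 \<le> 2 * C * (M + c) * P1" using C c P1 M0 by simp
    have "z s * (2 * C * (M + c) * P1) \<le> M * (2 * C * (M + c) * P1)" by (rule mult_right_mono[OF zs(2) X])
    then show ?thesis by (simp add: ac_simps)
  qed
  have b2: "2 * C * c * M * P1 \<le> phi * Dl + C\<^sup>2 * c\<^sup>2 * P2"
  proof (rule le_sum_of_sq_le')
    show "0 \<le> phi * Dl" using phipos Dl by simp
    show "0 \<le> C\<^sup>2 * c\<^sup>2 * P2" using P2 by simp
    show "0 \<le> 2 * C * c * M * P1" using C c M0 P1 by simp
    have "(2 * C * c * M * P1)\<^sup>2 = 4 * C\<^sup>2 * c\<^sup>2 * M\<^sup>2 * P1\<^sup>2" by (simp add: power_mult_distrib)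
    also have "\<dots> \<le> 4 * C\<^sup>2 * c\<^sup>2 * M\<^sup>2 * (Dl * P2)" by (rule mult_left_mono) (use csP in auto)
    also have "\<dots> = 4 * (phi * Dl) * (C\<^sup>2 * c\<^sup>2 * P2)" using MM by (simp add: algebra_simps)
    finally show "(2 * C * c * M * P1)\<^sup>2 \<le> 4 * (phi * Dl) * (C\<^sup>2 * c\<^sup>2 * P2)" .
  qed
  have b3: "(M + c)\<^sup>2 \<le> 2 * phi + 2 * c\<^sup>2"
  proof -
    have "0 \<le> (M - c)\<^sup>2" by simp
    then show ?thesis using MM by (simp add: power2_diff power2_sum)
  qed
  have b4: "(1/2 + Dl) * C\<^sup>2 * (M + c)\<^sup>2 * P2 \<le> (1/2 + Dl) * C\<^sup>2 * (2 * phi + 2 * c\<^sup>2) * P2"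
  proof -
    have K: "0 \<le> (1/2 + Dl) * C\<^sup>2" using Dl by simp
    show ?thesis by (rule mult_right_mono[OF mult_left_mono[OF b3 K] P2])
  qed
  have expand1: "2 * M * C * (M + c) * P1 = phi * (2 * C * P1) + 2 * C * c * M * P1"
    using MM by (simp add: algebra_simps power2_eq_square)
  have expand2: "(1/2 + Dl) * C\<^sup>2 * (2 * phi + 2 * c\<^sup>2) * P2 = (1 + 2 * Dl) * phi * (C\<^sup>2 * P2) + (1 + 2 * Dl) * C\<^sup>2 * c\<^sup>2 * P2"
    by (simp add: algebra_simps)
    define dL where "dL = L ts - L s"
  have dL: "dL = 2 * C * P1 + Dl + C\<^sup>2 * P2" by (simp add: dL_def L_def P1_def P2_def Dl_def algebra_simps)
  have dL0: "dL \<ge> 0" using dL C P1 P2 Dl by simp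
  have conv: "Phi ts - Phi s \<ge> (1 + eps) * (2 * C\<^sup>2 * c\<^sup>2 * P2) + Phi s * ((1 + eps) * dL)"
  proof -
    have ee: "(1 + eps) * L ts = (1 + eps) * L s + (1 + eps) * dL" by (simp add: dL_def algebra_simps)
    have "exp ((1 + eps) * L ts) = exp ((1 + eps) * L s) * exp ((1 + eps) * dL)"
      unfolding ee by (rule exp_add)
    moreover have "1 \<le> exp ((1 + eps) * L s)" using Lnn[of s] s ts0 eps by simp
    moreover have "0 \<le> (1 + eps) * dL" using dL0 eps by simp
    moreover have "0 \<le> (z 0)\<^sup>2 + eps + (1 + eps) * (2 * C\<^sup>2 * c\<^sup>2 * I2 s)" using Gnn[of s] s ts0 by simp
    moreover have "(z 0)\<^sup>2 + eps + (1 + eps) * (2 * C\<^sup>2 * c\<^sup>2 * I2 s) \<le> (z 0)\<^sup>2 + eps + (1 + eps) * (2 * C\<^sup>2 * c\<^sup>2 * I2 ts)"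
    proof -
      have "2 * C\<^sup>2 * c\<^sup>2 * I2 s \<le> 2 * C\<^sup>2 * c\<^sup>2 * I2 ts" by (rule mult_left_mono) (use mono[of s ts] s ts0 in auto)
      then have "(1 + eps) * (2 * C\<^sup>2 * c\<^sup>2 * I2 s) \<le> (1 + eps) * (2 * C\<^sup>2 * c\<^sup>2 * I2 ts)"
        by (rule mult_left_mono) (use eps in auto)
      then show ?thesis by linarith
    qed
    ultimately have "Phi ts - Phi s \<ge> (((z 0)\<^sup>2 + eps + (1 + eps) * (2 * C\<^sup>2 * c\<^sup>2 * I2 ts)) - ((z 0)\<^sup>2 + eps + (1 + eps) * (2 * C\<^sup>2 * c\<^sup>2 * I2 s))) + Phi s * ((1 + eps) * dL)"
      unfolding Phi_def
      by (intro conv_step) auto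
    then show ?thesis by (simp add: P2_def algebra_simps)
  qed
  have r1: "phi * (2 * C * P1) \<le> (1 + eps) * Phi s * (2 * C * P1)"
    by (rule mult_right_mono) (use key1 C P1 in auto)
  have r2: "phi * Dl \<le> (1 + eps) * Phi s * Dl" by (rule mult_right_mono) (use key1 Dl in auto)
  have r3: "(1 + 2 * Dl) * phi * (C\<^sup>2 * P2) \<le> (1 + eps) * Phi s * (C\<^sup>2 * P2)"
    by (rule mult_right_mono) (use key P2 in auto)
  have r4: "C\<^sup>2 * c\<^sup>2 * P2 + (1 + 2 * Dl) * C\<^sup>2 * c\<^sup>2 * P2 \<le> (1 + eps) * (2 * C\<^sup>2 * c\<^sup>2 * P2)"
  proof -
    have "C\<^sup>2 * c\<^sup>2 * P2 + (1 + 2 * Dl) * C\<^sup>2 * c\<^sup>2 * P2 = (2 + 2 * Dl) * (C\<^sup>2 * c\<^sup>2 * P2)" by (simp add: algebra_simps)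
    also have "\<dots> \<le> (2 + 2 * eps) * (C\<^sup>2 * c\<^sup>2 * P2)" by (rule mult_right_mono) (use Dl eps P2 in auto)
    finally show ?thesis by (simp add: algebra_simps)
  qed
  have rhs: "Phi s * ((1 + eps) * dL) = (1 + eps) * Phi s * (2 * C * P1) + (1 + eps) * Phi s * Dl + (1 + eps) * Phi s * (C\<^sup>2 * P2)"
    by (simp add: dL algebra_simps)
  have "phi < Phi s + (Phi ts - Phi s)"
    using st zs2 b1 b2 b4 expand1 expand2 conv r1 r2 r3 r4 rhs by linarith
  then show False by (simp add: phi_def)
qed


lemma gronwall_final:
  fixes z I1 I2 :: "real \<Rightarrow> real" and T C c :: real
  assumes C: "C \<ge> 0" and c: "c \<ge> 0"
    and zc: "continuous_on {0..T} z" and z0: "\<forall>t\<in>{0..T}. z t \<ge> 0"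
    and I1c: "continuous_on {0..T} I1" and I2c: "continuous_on {0..T} I2"
    and I10: "I1 0 = 0" and I20: "I2 0 = 0"
    and mono: "\<And>s t. 0 \<le> s \<Longrightarrow> s \<le> t \<Longrightarrow> t \<le> T \<Longrightarrow> I1 s \<le> I1 t \<and> I2 s \<le> I2 t"
    and cs: "\<And>s t. 0 \<le> s \<Longrightarrow> s \<le> t \<Longrightarrow> t \<le> T \<Longrightarrow> (I1 t - I1 s)\<^sup>2 \<le> (t - s) * (I2 t - I2 s)"
    and step: "\<And>s t M. 0 \<le> s \<Longrightarrow> s \<le> t \<Longrightarrow> t \<le> T \<Longrightarrow> (\<forall>r\<in>{s..t}. z r \<le> M) \<Longrightarrow>
       (z t)\<^sup>2 \<le> (z s)\<^sup>2 + 2 * z s * C * (M + c) * (I1 t - I1 s)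
          + (1/2 + (t - s)) * C\<^sup>2 * (M + c)\<^sup>2 * (I2 t - I2 s)"
    and t: "t \<in> {0..T}"
  shows "(z t)\<^sup>2 \<le> ((z 0)\<^sup>2 + 2 * C\<^sup>2 * c\<^sup>2 * I2 t) * exp (2 * C * I1 t + t + C\<^sup>2 * I2 t)"
proof -
  define ep where "ep n = inverse (real (Suc n))" for n
  define X where "X n = ((z 0)\<^sup>2 + ep n + (1 + ep n) * (2 * C\<^sup>2 * c\<^sup>2 * I2 t)) * exp ((1 + ep n) * (2 * C * I1 t + t + C\<^sup>2 * I2 t))" for n
  have ep: "ep \<longlonglongrightarrow> 0" unfolding ep_def by (rule LIMSEQ_inverse_real_of_nat)
  have "X \<longlonglongrightarrow> ((z 0)\<^sup>2 + 0 + (1 + 0) * (2 * C\<^sup>2 * c\<^sup>2 * I2 t)) * exp ((1 + 0) * (2 * C * I1 t + t + C\<^sup>2 * I2 t))"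
    unfolding X_def by (intro tendsto_intros ep)
  then have lim: "X \<longlonglongrightarrow> ((z 0)\<^sup>2 + 2 * C\<^sup>2 * c\<^sup>2 * I2 t) * exp (2 * C * I1 t + t + C\<^sup>2 * I2 t)" by simp
  have "(z t)\<^sup>2 \<le> X n" for n
  proof -
    have "ep n > 0" by (simp add: ep_def)
    have "(z t)\<^sup>2 < X n" unfolding X_def
      by (rule bspec[OF gronwall_fail[OF C c \<open>ep n > 0\<close> zc z0 I1c I2c I10 I20 mono cs step] t])
    then show ?thesis by (rule less_imp_le)
  qed
  then show ?thesis by (intro LIMSEQ_le_const[OF lim]) auto
qed


lemma sbm_mult:
  fixes f g :: "'b \<Rightarrow> real"
  assumes "set_borel_measurable M A f" "set_borel_measurable M A g"
  shows "set_borel_measurable M A (\<lambda>x. f x * g x)"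
proof -
  have "(\<lambda>x. indicator A x *\<^sub>R (f x * g x)) = (\<lambda>x. (indicator A x *\<^sub>R f x) * (indicator A x *\<^sub>R g x))"
    by (auto simp: indicator_def fun_eq_iff)
  then show ?thesis using assms unfolding set_borel_measurable_def by simp
qed

lemma sbm_abs:
  fixes f :: "'b \<Rightarrow> real"
  assumes "set_borel_measurable M A f"
  shows "set_borel_measurable M A (\<lambda>x. \<bar>f x\<bar>)"
proof -
  have "(\<lambda>x. indicator A x *\<^sub>R \<bar>f x\<bar>) = (\<lambda>x. \<bar>indicator A x *\<^sub>R f x\<bar>)"
    by (auto simp: indicator_def fun_eq_iff)
  then show ?thesis using assms unfolding set_borel_measurable_def by simp
qed

lemma sbm_cont:
  fixes f :: "real \<Rightarrow> real"
  assumes "continuous_on {a..b} f"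
  shows "set_borel_measurable lborel {a..b} f"
  unfolding set_borel_measurable_def
  using borel_measurable_continuous_on_indicator[OF _ assms] by simp

lemma sbm_subset:
  fixes f :: "real \<Rightarrow> real"
  assumes "set_borel_measurable lborel A f" "B \<in> sets borel" "B \<subseteq> A"
  shows "set_borel_measurable lborel B f"
  using set_borel_measurable_subset[of lborel A f B] assms by simp

lemma set_integral_inner:
  fixes F :: "'b \<Rightarrow> 'a::{real_inner,second_countable_topology}"
  assumes "set_integrable M A F"
  shows "inner (LINT s:A|M. F s) c = (LINT s:A|M. inner (F s) c)"
    and "set_integrable M A (\<lambda>s. inner (F s) c)"
proof -
  have i: "integrable M (\<lambda>s. indicator A s *\<^sub>R F s)" using assms by (simp add: set_integrable_def)
  have "inner (LINT s:A|M. F s) c = integral\<^sup>L M (\<lambda>s. inner (indicator A s *\<^sub>R F s) c)"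
    unfolding set_lebesgue_integral_def by (rule integral_inner_left[symmetric]) (use i in auto)
  also have "\<dots> = (LINT s:A|M. inner (F s) c)"
    unfolding set_lebesgue_integral_def by simp
  finally show "inner (LINT s:A|M. F s) c = (LINT s:A|M. inner (F s) c)" .
  have "integrable M (\<lambda>s. inner (indicator A s *\<^sub>R F s) c)"
    by (rule integrable_inner_left) (use i in auto)
  then show "set_integrable M A (\<lambda>s. inner (F s) c)"
    by (simp add: set_integrable_def)
qed

lemma set_integral_sum_real:
  fixes F :: "nat \<Rightarrow> 'b \<Rightarrow> real"
  assumes "\<And>k. k \<in> I \<Longrightarrow> set_integrable M A (F k)"
  shows "set_integrable M A (\<lambda>x. \<Sum>k\<in>I. F k x)"
    and "(LINT x:A|M. (\<Sum>k\<in>I. F k x)) = (\<Sum>k\<in>I. LINT x:A|M. F k x)"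
proof -
  have eq: "(\<lambda>x. indicator A x *\<^sub>R (\<Sum>k\<in>I. F k x)) = (\<lambda>x. \<Sum>k\<in>I. indicator A x *\<^sub>R F k x)"
    by (simp add: sum_distrib_left)
  have i: "\<And>k. k \<in> I \<Longrightarrow> integrable M (\<lambda>x. indicator A x *\<^sub>R F k x)"
    using assms by (simp add: set_integrable_def)
  show "set_integrable M A (\<lambda>x. \<Sum>k\<in>I. F k x)"
    unfolding set_integrable_def eq by (rule Bochner_Integration.integrable_sum) (rule i)
  show "(LINT x:A|M. (\<Sum>k\<in>I. F k x)) = (\<Sum>k\<in>I. LINT x:A|M. F k x)"
    unfolding set_lebesgue_integral_def eq by (rule Bochner_Integration.integral_sum) (rule i)
qed

lemma ev_within: "(\<And>s. s \<in> S \<Longrightarrow> P s) \<Longrightarrow> eventually P (at t within S)"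
  unfolding eventually_at_filter by (auto intro!: always_eventually)

locale setting =
  fixes lam :: "nat \<Rightarrow> real" and e :: "nat \<Rightarrow> 'a::{real_inner,complete_space,second_countable_topology}"
    and B :: "'a \<Rightarrow> 'a" and DB :: "'a set" and C_B T :: real and v0 :: 'a
    and p :: "real \<Rightarrow> real" and v :: "real \<Rightarrow> 'a"
  assumes on: "orthonormal_seq e" and basis: "closure (span (range e)) = UNIV"
    and l: "\<forall>k. lam k \<ge> 0"
    and B_lin: "lin_op_on DB B" and B_dom: "frac_dom lam e (1/2) \<subseteq> DB"
    and C_B_pos: "C_B > 0"
    and B_bound: "\<forall>x\<in>frac_dom lam e (1/2). norm (B x) \<le> C_B * frac_norm lam e (1/2) x"
    and T_pos: "T > 0"
    and v0_dom: "v0 \<in> frac_dom lam e (1/2)"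
    and p_meas: "set_borel_measurable lborel {0..T} p"
    and p_L2: "set_integrable lborel {0..T} (\<lambda>t. (p t)\<^sup>2)"
    and v_sol: "mild_solution lam e B T v0 p v"
begin

abbreviation "FD \<equiv> frac_dom lam e (1/2)"
abbreviation "FN \<equiv> frac_norm lam e (1/2)"
definition "z r = FN (v r)"
definition "g r = B (v r) + B (e 0)"
definition "cc = sqrt (1 + lam 0)"
definition "w k r = inner (v r) (e k)"
definition "h k r = p r * inner (g r) (e k)"

lemma v_dom: "r \<in> {0..T} \<Longrightarrow> v r \<in> FD"
  using v_sol unfolding mild_solution_def by blast

lemma B_diff:
  assumes "x \<in> FD" "y \<in> FD"
  shows "B x - B y = B (x - y)"
proof -
  have xy: "x - y \<in> DB" "y \<in> DB" using dom_diff[OF l assms] assms B_dom by auto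
  have "B ((x - y) + y) = B (x - y) + B y"
    using B_lin xy unfolding lin_op_on_def by blast
  then show ?thesis by simp
qed

lemma fn_cont0:
  assumes "t \<in> {0..T}"
  shows "((\<lambda>s. FN (v s - v t)) \<longlongrightarrow> 0) (at t within {0..T})"
  using v_sol assms unfolding mild_solution_def by blast

lemma g_cont: "continuous_on {0..T} g"
  unfolding continuous_on_def
proof
  fix t assume t: "t \<in> {0..T}"
  have "((\<lambda>s. g s - g t) \<longlongrightarrow> 0) (at t within {0..T})"
  proof (rule Lim_null_comparison)
    show "((\<lambda>s. C_B * FN (v s - v t)) \<longlongrightarrow> 0) (at t within {0..T})"
      using tendsto_mult_right_zero[OF fn_cont0[OF t], of C_B] by simp
    show "\<forall>\<^sub>F s in at t within {0..T}. norm (g s - g t) \<le> C_B * FN (v s - v t)"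
    proof (rule ev_within)
      fix s assume s: "s \<in> {0..T}"
      have "g s - g t = B (v s - v t)" unfolding g_def using B_diff[OF v_dom[OF s] v_dom[OF t]] by simp
      then show "norm (g s - g t) \<le> C_B * FN (v s - v t)"
        using B_bound dom_diff[OF l v_dom[OF s] v_dom[OF t]] by simp
    qed
  qed
  then show "(g \<longlongrightarrow> g t) (at t within {0..T})" by (simp add: Lim_null[symmetric])
qed

lemma z_cont: "continuous_on {0..T} z"
  unfolding continuous_on_def
proof
  fix t assume t: "t \<in> {0..T}"
  have "((\<lambda>s. z s - z t) \<longlongrightarrow> 0) (at t within {0..T})"
  proof (rule Lim_null_comparison)
    show "((\<lambda>s. FN (v s - v t)) \<longlongrightarrow> 0) (at t within {0..T})" by (rule fn_cont0[OF t])
    show "\<forall>\<^sub>F s in at t within {0..T}. norm (z s - z t) \<le> FN (v s - v t)"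
    proof (rule ev_within)
      fix s assume s: "s \<in> {0..T}"
      show "norm (z s - z t) \<le> FN (v s - v t)"
        unfolding z_def using frac_norm_lip[OF on l v_dom[OF s] v_dom[OF t]] by simp
    qed
  qed
  then show "(z \<longlongrightarrow> z t) (at t within {0..T})" by (simp add: Lim_null[symmetric])
qed

lemma z_nonneg: "0 \<le> z r" unfolding z_def by (rule frac_norm_nonneg)

lemma cc_fn: "FN (e 0) = cc"
proof -
  have "(FN (e 0))\<^sup>2 = 1 + lam 0" by (rule e_frac_norm[OF on basis l])
  then show ?thesis unfolding cc_def using frac_norm_nonneg
    by (metis real_sqrt_abs abs_of_nonneg)
qed

lemma cc_nonneg: "0 \<le> cc" unfolding cc_def using l by simp

lemma G_bound:
  assumes "r \<in> {0..T}"
  shows "norm (g r) \<le> C_B * (z r + cc)"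
proof -
  have "norm (g r) \<le> norm (B (v r)) + norm (B (e 0))" unfolding g_def by (rule norm_triangle_ineq)
  also have "\<dots> \<le> C_B * z r + C_B * cc"
    using B_bound v_dom[OF assms] e_dom[OF on l, of 0] cc_fn unfolding z_def
    by (intro add_mono) auto
  finally show ?thesis by (simp add: algebra_simps)
qed

lemma abs_le_1_sq: "\<bar>x::real\<bar> \<le> 1 + x\<^sup>2"
proof -
  have "0 \<le> (\<bar>x\<bar> - 1)\<^sup>2" by simp
  then have "2 * \<bar>x\<bar> \<le> x\<^sup>2 + 1" by (simp add: power2_diff power2_abs)
  moreover have "0 \<le> x\<^sup>2" by simp
  ultimately show ?thesis by linarith
qed

lemma const_int: "set_integrable lborel {a..b::real} (\<lambda>r. c::real)"
  by (intro borel_integrable_atLeastAtMost' continuous_intros)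

lemma p_abs_int: "set_integrable lborel {0..T} (\<lambda>r. \<bar>p r\<bar>)"
proof (rule set_integrable_bound[where f="\<lambda>r. 1 + (p r)\<^sup>2"])
  show "set_integrable lborel {0..T} (\<lambda>r. 1 + (p r)\<^sup>2)"
    by (rule set_integral_add(1)[OF const_int p_L2])
  show "set_borel_measurable lborel {0..T} (\<lambda>r. \<bar>p r\<bar>)" by (rule sbm_abs[OF p_meas])
  show "AE x in lborel. x \<in> {0..T} \<longrightarrow> norm \<bar>p x\<bar> \<le> norm (1 + (p x)\<^sup>2)"
    using abs_le_1_sq by (intro AE_I2) (auto simp: abs_of_nonneg add_nonneg_nonneg)
qed

lemma norm_e: "norm (e k) = 1"
  using on_inner[OF on, of k k] by (simp add: norm_eq_sqrt_inner)

lemma gk_le: "\<bar>inner (g r) (e k)\<bar> \<le> norm (g r)"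
  using Cauchy_Schwarz_ineq2[of "g r" "e k"] norm_e by simp

lemma Gm_ex: "\<exists>Gm. Gm \<ge> 0 \<and> (\<forall>r\<in>{0..T}. norm (g r) \<le> Gm)"
proof -
  have "compact (g ` {0..T})" by (rule compact_continuous_image[OF g_cont compact_Icc])
  then have "bounded (g ` {0..T})" by (rule compact_imp_bounded)
  then obtain b where "\<forall>x\<in>g ` {0..T}. norm x \<le> b" unfolding bounded_iff by blast
  then have "\<forall>r\<in>{0..T}. norm (g r) \<le> max b 0" by auto
  then show ?thesis by (intro exI[of _ "max b 0"]) auto
qed

lemma normg_cont: "continuous_on {0..T} (\<lambda>r. norm (g r))"
  by (intro continuous_intros g_cont)

lemma gk_cont: "continuous_on {0..T} (\<lambda>r. inner (g r) (e k))"
  by (intro continuous_intros g_cont)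

lemma pG_int: "set_integrable lborel {0..T} (\<lambda>r. \<bar>p r\<bar> * norm (g r))"
proof -
  obtain Gm where Gm: "Gm \<ge> 0" "\<forall>r\<in>{0..T}. norm (g r) \<le> Gm" using Gm_ex by blast
  show ?thesis
  proof (rule set_integrable_bound[where f="\<lambda>r. Gm * \<bar>p r\<bar>"])
    show "set_integrable lborel {0..T} (\<lambda>r. Gm * \<bar>p r\<bar>)" using p_abs_int by simp
    show "set_borel_measurable lborel {0..T} (\<lambda>r. \<bar>p r\<bar> * norm (g r))"
      by (rule sbm_mult[OF sbm_abs[OF p_meas] sbm_cont[OF normg_cont]])
    show "AE x in lborel. x \<in> {0..T} \<longrightarrow> norm (\<bar>p x\<bar> * norm (g x)) \<le> norm (Gm * \<bar>p x\<bar>)"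
    proof (intro AE_I2 impI)
      fix x assume "x \<in> {0..T}"
      then have "norm (g x) \<le> Gm" using Gm by auto
      then have "\<bar>p x\<bar> * norm (g x) \<le> \<bar>p x\<bar> * Gm" by (rule mult_left_mono) simp
      then show "norm (\<bar>p x\<bar> * norm (g x)) \<le> norm (Gm * \<bar>p x\<bar>)" using Gm by (simp add: abs_mult mult.commute)
    qed
  qed
qed

lemma p2G2_int: "set_integrable lborel {0..T} (\<lambda>r. (p r)\<^sup>2 * (norm (g r))\<^sup>2)"
proof -
  obtain Gm where Gm: "Gm \<ge> 0" "\<forall>r\<in>{0..T}. norm (g r) \<le> Gm" using Gm_ex by blast
  show ?thesis
  proof (rule set_integrable_bound[where f="\<lambda>r. Gm\<^sup>2 * (p r)\<^sup>2"])
    show "set_integrable lborel {0..T} (\<lambda>r. Gm\<^sup>2 * (p r)\<^sup>2)" using p_L2 by simp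
    have m: "set_borel_measurable lborel {0..T} (\<lambda>r. (p r * norm (g r)) * (p r * norm (g r)))"
      by (intro sbm_mult p_meas sbm_cont[OF normg_cont])
    show "set_borel_measurable lborel {0..T} (\<lambda>r. (p r)\<^sup>2 * (norm (g r))\<^sup>2)"
      using m by (simp add: power2_eq_square algebra_simps)
    show "AE x in lborel. x \<in> {0..T} \<longrightarrow> norm ((p x)\<^sup>2 * (norm (g x))\<^sup>2) \<le> norm (Gm\<^sup>2 * (p x)\<^sup>2)"
    proof (intro AE_I2 impI)
      fix x assume "x \<in> {0..T}"
      then have "norm (g x) \<le> Gm" using Gm by auto
      then have "(norm (g x))\<^sup>2 \<le> Gm\<^sup>2" by (intro power_mono) auto
      then have "(p x)\<^sup>2 * (norm (g x))\<^sup>2 \<le> (p x)\<^sup>2 * Gm\<^sup>2" by (rule mult_left_mono) simp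
      then show "norm ((p x)\<^sup>2 * (norm (g x))\<^sup>2) \<le> norm (Gm\<^sup>2 * (p x)\<^sup>2)" by (simp add: mult.commute)
    qed
  qed
qed

lemma h_meas: "set_borel_measurable lborel {0..T} (h k)"
  unfolding h_def[abs_def] by (rule sbm_mult[OF p_meas sbm_cont[OF gk_cont]])

lemma h2_int: "set_integrable lborel {0..T} (\<lambda>r. (h k r)\<^sup>2)"
proof (rule set_integrable_bound[OF p2G2_int])
  have "set_borel_measurable lborel {0..T} (\<lambda>r. h k r * h k r)" by (intro sbm_mult h_meas)
  then show "set_borel_measurable lborel {0..T} (\<lambda>r. (h k r)\<^sup>2)" by (simp add: power2_eq_square)
  show "AE x in lborel. x \<in> {0..T} \<longrightarrow> norm ((h k x)\<^sup>2) \<le> norm ((p x)\<^sup>2 * (norm (g x))\<^sup>2)"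
  proof (intro AE_I2 impI)
    fix x
    have "(inner (g x) (e k))\<^sup>2 \<le> (norm (g x))\<^sup>2"
      using gk_le[of x k] by (metis abs_ge_zero power2_abs power_mono)
    then have "(p x)\<^sup>2 * (inner (g x) (e k))\<^sup>2 \<le> (p x)\<^sup>2 * (norm (g x))\<^sup>2" by (rule mult_left_mono) simp
    then show "norm ((h k x)\<^sup>2) \<le> norm ((p x)\<^sup>2 * (norm (g x))\<^sup>2)"
      by (simp add: h_def power_mult_distrib)
  qed
qed

lemma mode:
  assumes t: "t \<in> {0..T}"
  shows "set_integrable lborel {0..t} (\<lambda>r. exp (- lam k * (t - r)) * h k r)"
    and "w k t = exp (- lam k * t) * inner v0 (e k) - (LINT r:{0..t}|lborel. exp (- lam k * (t - r)) * h k r)"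
proof -
  have si: "set_integrable lborel {0..t} (\<lambda>s. p s *\<^sub>R sgrp lam e (t - s) (g s))"
    and veq: "v t = sgrp lam e t v0 - (LINT s:{0..t}|lborel. p s *\<^sub>R sgrp lam e (t - s) (g s))"
    using v_sol t unfolding mild_solution_def g_def by blast+
  have pt: "inner (p s *\<^sub>R sgrp lam e (t - s) (g s)) (e k) = exp (- lam k * (t - s)) * h k s"
    if "s \<in> {0..t}" for s
    using that sgrp_inner[OF on l, of "t - s" "g s" k] by (simp add: h_def)
  have "set_integrable lborel {0..t} (\<lambda>s. inner (p s *\<^sub>R sgrp lam e (t - s) (g s)) (e k))"
    by (rule set_integral_inner(2)[OF si])
  then show "set_integrable lborel {0..t} (\<lambda>r. exp (- lam k * (t - r)) * h k r)"
    using set_integrable_cong[of lborel lborel "{0..t}" "{0..t}" "\<lambda>s. inner (p s *\<^sub>R sgrp lam e (t - s) (g s)) (e k)" "\<lambda>r. exp (- lam k * (t - r)) * h k r"] pt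
    by simp
  have "w k t = inner (sgrp lam e t v0) (e k) - inner (LINT s:{0..t}|lborel. p s *\<^sub>R sgrp lam e (t - s) (g s)) (e k)"
    unfolding w_def by (subst veq) (simp add: inner_diff_left)
  also have "inner (sgrp lam e t v0) (e k) = exp (- lam k * t) * inner v0 (e k)"
    using t by (intro sgrp_inner[OF on l]) auto
  also have "inner (LINT s:{0..t}|lborel. p s *\<^sub>R sgrp lam e (t - s) (g s)) (e k)
      = (LINT s:{0..t}|lborel. inner (p s *\<^sub>R sgrp lam e (t - s) (g s)) (e k))"
    by (rule set_integral_inner(1)[OF si])
  also have "\<dots> = (LINT r:{0..t}|lborel. exp (- lam k * (t - r)) * h k r)"
    by (rule set_lebesgue_integral_cong) (use pt in auto)
  finally show "w k t = exp (- lam k * t) * inner v0 (e k) - (LINT r:{0..t}|lborel. exp (- lam k * (t - r)) * h k r)" .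
qed

lemma split_int:
  fixes F :: "real \<Rightarrow> real"
  assumes st: "0 \<le> s" "s \<le> t" and F: "set_integrable lborel {0..t} F"
  shows "(LINT r:{0..t}|lborel. F r) = (LINT r:{0..s}|lborel. F r) + (LINT r:{s<..t}|lborel. F r)"
proof -
  have U: "{0..t} = {0..s} \<union> {s<..t}" using st by auto
  have i1: "set_integrable lborel {0..s} F" by (rule set_integrable_subset[OF F]) (use st in auto)
  have i2: "set_integrable lborel {s<..t} F" by (rule set_integrable_subset[OF F]) (use st in auto)
  have "(LINT r:{0..s} \<union> {s<..t}|lborel. F r) = (LINT r:{0..s}|lborel. F r) + (LINT r:{s<..t}|lborel. F r)"
    by (rule set_integral_Un[OF _ i1 i2]) auto
  then show ?thesis by (simp only: U)
qed

lemma sub_int: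
  fixes F :: "real \<Rightarrow> real"
  assumes "set_integrable lborel {0..t} F" "0 \<le> s"
  shows "set_integrable lborel {s<..t} F"
  by (rule set_integrable_subset[OF assms(1)]) (use assms(2) in auto)

lemma sub_intT:
  fixes F :: "real \<Rightarrow> real"
  assumes "set_integrable lborel {0..T} F" "0 \<le> s" "t \<le> T"
  shows "set_integrable lborel {s<..t} F" "set_integrable lborel {0..t} F"
  by (rule set_integrable_subset[OF assms(1)]; use assms(2,3) in auto)+

definition "J s t k = (LINT r:{s<..t}|lborel. exp (- lam k * (t - r)) * h k r)"
definition "eta s t k = (LINT r:{s<..t}|lborel. (h k r)\<^sup>2)"

lemma restart:
  assumes st: "0 \<le> s" "s \<le> t" "t \<le> T"
  shows "w k t = exp (- lam k * (t - s)) * w k s - J s t k"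
proof -
  have tT: "t \<in> {0..T}" and sT: "s \<in> {0..T}" using st by auto
  have fi: "set_integrable lborel {0..t} (\<lambda>r. exp (- lam k * (t - r)) * h k r)" by (rule mode(1)[OF tT])
  define E where "E = exp (- lam k * (t - s))"
  have e1: "exp (- lam k * (t - r)) = E * exp (- lam k * (s - r))" for r
    unfolding E_def by (subst exp_add[symmetric]) (simp add: algebra_simps)
  have e2: "exp (- lam k * t) = E * exp (- lam k * s)"
    unfolding E_def by (subst exp_add[symmetric]) (simp add: algebra_simps)
  have "(LINT r:{0..s}|lborel. exp (- lam k * (t - r)) * h k r)
      = (LINT r:{0..s}|lborel. E * (exp (- lam k * (s - r)) * h k r))"
    by (simp only: e1 mult.assoc)
  also have "\<dots> = E * (LINT r:{0..s}|lborel. exp (- lam k * (s - r)) * h k r)"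
    by (rule set_integral_mult_right)
  finally have i0: "(LINT r:{0..s}|lborel. exp (- lam k * (t - r)) * h k r) = E * (LINT r:{0..s}|lborel. exp (- lam k * (s - r)) * h k r)" .
  define Es where "Es = exp (- lam k * s)"
  define A0 where "A0 = inner v0 (e k)"
  define Is where "Is = (LINT r:{0..s}|lborel. exp (- lam k * (s - r)) * h k r)"
  define It where "It = (LINT r:{0..t}|lborel. exp (- lam k * (t - r)) * h k r)"
  define Jv where "Jv = J s t k"
  have wt: "w k t = exp (- lam k * t) * A0 - It" unfolding A0_def It_def by (rule mode(2)[OF tT])
  have ws: "w k s = Es * A0 - Is" unfolding A0_def Is_def Es_def by (rule mode(2)[OF sT])
  have It: "It = E * Is + Jv" unfolding It_def split_int[OF st(1,2) fi] i0 J_def Jv_def Is_def ..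
  have "w k t = E * Es * A0 - (E * Is + Jv)" unfolding wt It e2 Es_def ..
  also have "\<dots> = E * (Es * A0 - Is) - Jv" by (simp add: right_diff_distrib mult.assoc)
  also have "\<dots> = E * w k s - Jv" by (simp only: ws)
  finally show ?thesis by (simp only: E_def Jv_def)
qed

lemma per_mode:
  assumes st: "0 \<le> s" "s \<le> t" "t \<le> T"
  shows "(1 + lam k) * (w k t)\<^sup>2 \<le> (1 + lam k) * (w k s)\<^sup>2 + 2 * \<bar>w k s\<bar> * \<bar>J s t k\<bar> + (1/2 + (t - s)) * eta s t k"
proof -
  have tT: "t \<in> {0..T}" using st by auto
  define U where "U = (LINT r:{s<..t}|lborel. (exp (- lam k * (t - r)))\<^sup>2)"
  have lk: "lam k \<ge> 0" using l by simp
  note EI = exp_integral[OF lk st(2)]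
  have fi: "set_integrable lborel {s<..t} (\<lambda>r. exp (- lam k * (t - r)) * h k r)"
    by (rule sub_int[OF mode(1)[OF tT] st(1)])
  have hi: "set_integrable lborel {s<..t} (\<lambda>r. (h k r)\<^sup>2)"
    by (rule sub_intT(1)[OF h2_int st(1,3)])
  have cs: "(J s t k)\<^sup>2 \<le> U * eta s t k"
    unfolding J_def U_def eta_def by (rule set_cs[OF EI(4) hi fi])
  have eta0: "0 \<le> eta s t k" unfolding eta_def by (rule set_integral_nonneg') simp
  have E1: "exp (- lam k * (t - s)) \<le> 1" using lk st by (simp add: mult_nonneg_nonneg)
  have "(1 + lam k) * (exp (- lam k * (t - s)) * w k s - J s t k)\<^sup>2 \<le> (1 + lam k) * (w k s)\<^sup>2 + 2 * \<bar>w k s\<bar> * \<bar>J s t k\<bar> + (1/2 + (t - s)) * eta s t k"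
    by (rule mode_step[OF lk _ E1 cs _ _ _ eta0]) (use EI in \<open>auto simp: U_def\<close>)
  then show ?thesis using restart[OF st] by simp
qed

lemma pG_nonneg_int:
  assumes "0 \<le> s" "s \<le> t" "t \<le> T"
  shows "0 \<le> (LINT r:{s<..t}|lborel. \<bar>p r\<bar> * norm (g r))"
  by (rule set_integral_nonneg') simp

lemma sumJ:
  assumes st: "0 \<le> s" "s \<le> t" "t \<le> T"
  shows "sqrt (\<Sum>k<n. (J s t k)\<^sup>2) \<le> (LINT r:{s<..t}|lborel. \<bar>p r\<bar> * norm (g r))"
proof -
  have tT: "t \<in> {0..T}" using st by auto
  define S where "S = (\<Sum>k<n. (J s t k)\<^sup>2)"
  define P where "P = (LINT r:{s<..t}|lborel. \<bar>p r\<bar> * norm (g r))"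
  have S0: "0 \<le> S" unfolding S_def by (simp add: sum_nonneg)
  have P0: "0 \<le> P" unfolding P_def by (rule pG_nonneg_int[OF st])
  have fi: "\<And>k. set_integrable lborel {s<..t} (\<lambda>r. exp (- lam k * (t - r)) * h k r)"
    by (rule sub_int[OF mode(1)[OF tT] st(1)])
  have fi2: "\<And>k. set_integrable lborel {s<..t} (\<lambda>r. J s t k * (exp (- lam k * (t - r)) * h k r))"
    using fi by simp
  have "S = (\<Sum>k<n. J s t k * (LINT r:{s<..t}|lborel. exp (- lam k * (t - r)) * h k r))"
    unfolding S_def J_def by (simp add: power2_eq_square)
  also have "\<dots> = (\<Sum>k<n. (LINT r:{s<..t}|lborel. J s t k * (exp (- lam k * (t - r)) * h k r)))"
    by simp
  also have "\<dots> = (LINT r:{s<..t}|lborel. (\<Sum>k<n. J s t k * (exp (- lam k * (t - r)) * h k r)))"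
    by (rule set_integral_sum_real(2)[symmetric]) (rule fi2)
  also have "\<dots> \<le> (LINT r:{s<..t}|lborel. sqrt S * (\<bar>p r\<bar> * norm (g r)))"
  proof (rule set_integral_mono)
    show "set_integrable lborel {s<..t} (\<lambda>r. \<Sum>k<n. J s t k * (exp (- lam k * (t - r)) * h k r))"
      by (rule set_integral_sum_real(1)) (rule fi2)
    show "set_integrable lborel {s<..t} (\<lambda>r. sqrt S * (\<bar>p r\<bar> * norm (g r)))"
      using sub_intT(1)[OF pG_int st(1,3)] by simp
    fix r assume r: "r \<in> {s<..t}"
    define c where "c k = J s t k * exp (- lam k * (t - r))" for k
    have "(\<Sum>k<n. J s t k * (exp (- lam k * (t - r)) * h k r)) = p r * inner (g r) (\<Sum>k<n. c k *\<^sub>R e k)"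
      by (simp add: c_def h_def inner_sum_right sum_distrib_left algebra_simps)
    also have "\<dots> \<le> \<bar>p r\<bar> * (norm (g r) * norm (\<Sum>k<n. c k *\<^sub>R e k))"
    proof -
      have "\<bar>inner (g r) (\<Sum>k<n. c k *\<^sub>R e k)\<bar> \<le> norm (g r) * norm (\<Sum>k<n. c k *\<^sub>R e k)"
        by (rule Cauchy_Schwarz_ineq2)
      then have "\<bar>p r * inner (g r) (\<Sum>k<n. c k *\<^sub>R e k)\<bar> \<le> \<bar>p r\<bar> * (norm (g r) * norm (\<Sum>k<n. c k *\<^sub>R e k))"
        by (simp add: abs_mult mult_left_mono)
      then show ?thesis by simp
    qed
    also have "norm (\<Sum>k<n. c k *\<^sub>R e k) \<le> sqrt S"
    proof -
      have "(norm (\<Sum>k<n. c k *\<^sub>R e k))\<^sup>2 = (\<Sum>k<n. (c k)\<^sup>2)" by (rule norm_sum_coef[OF on]) simp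
      also have "\<dots> \<le> S" unfolding S_def
      proof (rule sum_mono)
        fix k
        have "exp (- lam k * (t - r)) \<le> 1" using l r by (simp add: mult_nonneg_nonneg)
        then have "(exp (- lam k * (t - r)))\<^sup>2 \<le> 1" by (simp add: power_le_one)
        then have "(J s t k)\<^sup>2 * (exp (- lam k * (t - r)))\<^sup>2 \<le> (J s t k)\<^sup>2 * 1" by (rule mult_left_mono) simp
        then show "(c k)\<^sup>2 \<le> (J s t k)\<^sup>2" by (simp add: c_def power_mult_distrib)
      qed
      finally show ?thesis by (simp add: real_le_rsqrt)
    qed
    then have "\<bar>p r\<bar> * (norm (g r) * norm (\<Sum>k<n. c k *\<^sub>R e k)) \<le> \<bar>p r\<bar> * (norm (g r) * sqrt S)"
      by (intro mult_left_mono) auto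
    finally show "(\<Sum>k<n. J s t k * (exp (- lam k * (t - r)) * h k r)) \<le> sqrt S * (\<bar>p r\<bar> * norm (g r))"
      by (simp add: algebra_simps)
  qed
  also have "\<dots> = sqrt S * P" unfolding P_def by simp
  finally have SP: "S \<le> sqrt S * P" .
  show ?thesis
  proof (cases "S = 0")
    case True then show ?thesis using P0 by (simp add: S_def[symmetric] P_def[symmetric])
  next
    case False
    then have "sqrt S > 0" using S0 by simp
    moreover have "sqrt S * sqrt S \<le> sqrt S * P" using SP S0 by simp
    ultimately have "sqrt S \<le> P" by (rule mult_left_le_imp_le[rotated])
    then show ?thesis by (simp add: S_def P_def)
  qed
qed

lemma sum_eta:
  assumes st: "0 \<le> s" "s \<le> t" "t \<le> T"
  shows "(\<Sum>k<n. eta s t k) \<le> (LINT r:{s<..t}|lborel. (p r)\<^sup>2 * (norm (g r))\<^sup>2)"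
proof -
  have hi: "\<And>k. set_integrable lborel {s<..t} (\<lambda>r. (h k r)\<^sup>2)"
    by (rule sub_intT(1)[OF h2_int st(1,3)])
  have "(\<Sum>k<n. eta s t k) = (LINT r:{s<..t}|lborel. (\<Sum>k<n. (h k r)\<^sup>2))"
    unfolding eta_def by (rule set_integral_sum_real(2)[symmetric]) (rule hi)
  also have "\<dots> \<le> (LINT r:{s<..t}|lborel. (p r)\<^sup>2 * (norm (g r))\<^sup>2)"
  proof (rule set_integral_mono)
    show "set_integrable lborel {s<..t} (\<lambda>r. \<Sum>k<n. (h k r)\<^sup>2)"
      by (rule set_integral_sum_real(1)) (rule hi)
    show "set_integrable lborel {s<..t} (\<lambda>r. (p r)\<^sup>2 * (norm (g r))\<^sup>2)"
      by (rule sub_intT(1)[OF p2G2_int st(1,3)])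
    fix r
    have "(\<Sum>k<n. (h k r)\<^sup>2) = (p r)\<^sup>2 * (\<Sum>k<n. (inner (g r) (e k))\<^sup>2)"
      by (simp add: h_def power_mult_distrib sum_distrib_left)
    also have "\<dots> \<le> (p r)\<^sup>2 * (norm (g r))\<^sup>2"
      by (rule mult_left_mono[OF bessel_partial[OF on]]) auto
    finally show "(\<Sum>k<n. (h k r)\<^sup>2) \<le> (p r)\<^sup>2 * (norm (g r))\<^sup>2" .
  qed
  finally show ?thesis .
qed

lemma interval_ineq:
  assumes st: "0 \<le> s" "s \<le> t" "t \<le> T"
  shows "(z t)\<^sup>2 \<le> (z s)\<^sup>2 + 2 * z s * (LINT r:{s<..t}|lborel. \<bar>p r\<bar> * norm (g r))
           + (1/2 + (t - s)) * (LINT r:{s<..t}|lborel. (p r)\<^sup>2 * (norm (g r))\<^sup>2)"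
proof -
  define P where "P = (LINT r:{s<..t}|lborel. \<bar>p r\<bar> * norm (g r))"
  define Q where "Q = (LINT r:{s<..t}|lborel. (p r)\<^sup>2 * (norm (g r))\<^sup>2)"
  have tT: "t \<in> {0..T}" and sT: "s \<in> {0..T}" using st by auto
  have sums_t: "(\<lambda>k. (1 + lam k) * (w k t)\<^sup>2) sums (z t)\<^sup>2"
    unfolding w_def z_def by (rule frac_norm_sums[OF on basis l v_dom[OF tT]])
  have sums_s: "(\<lambda>k. (1 + lam k) * (w k s)\<^sup>2) sums (z s)\<^sup>2"
    unfolding w_def z_def by (rule frac_norm_sums[OF on basis l v_dom[OF sT]])
  have P0: "0 \<le> P" unfolding P_def by (rule pG_nonneg_int[OF st])
  have "(\<Sum>k<n. (1 + lam k) * (w k t)\<^sup>2) \<le> (z s)\<^sup>2 + 2 * z s * P + (1/2 + (t - s)) * Q" for n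
  proof -
    have "(\<Sum>k<n. (1 + lam k) * (w k t)\<^sup>2) \<le> (\<Sum>k<n. (1 + lam k) * (w k s)\<^sup>2 + 2 * \<bar>w k s\<bar> * \<bar>J s t k\<bar> + (1/2 + (t - s)) * eta s t k)"
      by (rule sum_mono) (rule per_mode[OF st])
    also have "\<dots> = (\<Sum>k<n. (1 + lam k) * (w k s)\<^sup>2) + 2 * (\<Sum>k<n. \<bar>w k s\<bar> * \<bar>J s t k\<bar>) + (1/2 + (t - s)) * (\<Sum>k<n. eta s t k)"
      by (simp add: sum.distrib sum_distrib_left mult.assoc)
    finally have S1: "(\<Sum>k<n. (1 + lam k) * (w k t)\<^sup>2) \<le> (\<Sum>k<n. (1 + lam k) * (w k s)\<^sup>2) + 2 * (\<Sum>k<n. \<bar>w k s\<bar> * \<bar>J s t k\<bar>) + (1/2 + (t - s)) * (\<Sum>k<n. eta s t k)" .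
    have S2: "(\<Sum>k<n. (1 + lam k) * (w k s)\<^sup>2) \<le> (z s)\<^sup>2"
    proof -
      have "(\<Sum>k<n. (1 + lam k) * (w k s)\<^sup>2) \<le> (\<Sum>k. (1 + lam k) * (w k s)\<^sup>2)"
        by (rule sum_le_suminf[OF sums_summable[OF sums_s]]) (use l in auto)
      then show ?thesis using sums_unique[OF sums_s] by simp
    qed
    have S3: "(\<Sum>k<n. \<bar>w k s\<bar> * \<bar>J s t k\<bar>) \<le> z s * P"
    proof -
      define X where "X = (\<Sum>k<n. (w k s)\<^sup>2)"
      define Y where "Y = (\<Sum>k<n. (J s t k)\<^sup>2)"
      have X0: "0 \<le> X" and Y0: "0 \<le> Y" unfolding X_def Y_def by (auto intro: sum_nonneg)
      have "(\<Sum>k<n. \<bar>w k s\<bar> * \<bar>J s t k\<bar>)\<^sup>2 \<le> (\<Sum>k<n. \<bar>w k s\<bar>\<^sup>2) * (\<Sum>k<n. \<bar>J s t k\<bar>\<^sup>2)"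
        by (rule Cauchy_Schwarz_ineq_sum)
      then have "(\<Sum>k<n. \<bar>w k s\<bar> * \<bar>J s t k\<bar>)\<^sup>2 \<le> X * Y" by (simp add: X_def Y_def)
      then have "(\<Sum>k<n. \<bar>w k s\<bar> * \<bar>J s t k\<bar>) \<le> sqrt (X * Y)" by (rule real_le_rsqrt)
      also have "\<dots> = sqrt X * sqrt Y" by (rule real_sqrt_mult)
      also have "\<dots> \<le> z s * P"
      proof (rule mult_mono)
        have "X \<le> (norm (v s))\<^sup>2" unfolding X_def w_def by (rule bessel_partial[OF on]) simp
        then have "sqrt X \<le> norm (v s)" by (simp add: real_sqrt_le_iff real_le_lsqrt)
        also have "norm (v s) \<le> z s" unfolding z_def by (rule frac_norm_ge)
        finally show "sqrt X \<le> z s" .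
        show "sqrt Y \<le> P" unfolding Y_def P_def by (rule sumJ[OF st])
        show "0 \<le> z s" by (rule z_nonneg)
        show "0 \<le> sqrt Y" using Y0 by simp
      qed
      finally show ?thesis .
    qed
    have S4: "(\<Sum>k<n. eta s t k) \<le> Q" unfolding Q_def by (rule sum_eta[OF st])
    have S5: "(1/2 + (t - s)) * (\<Sum>k<n. eta s t k) \<le> (1/2 + (t - s)) * Q"
      by (rule mult_left_mono[OF S4]) (use st in simp)
    show ?thesis using S1 S2 S3 S5 by linarith
  qed
  then have "(\<Sum>k. (1 + lam k) * (w k t)\<^sup>2) \<le> (z s)\<^sup>2 + 2 * z s * P + (1/2 + (t - s)) * Q"
    by (intro suminf_le_const sums_summable[OF sums_t])
  then show ?thesis using sums_unique[OF sums_t] by (simp add: P_def Q_def)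
qed

definition "I1 t = (LINT r:{0..t}|lborel. \<bar>p r\<bar>)"
definition "I2 t = (LINT r:{0..t}|lborel. (p r)\<^sup>2)"

lemma I_split:
  assumes st: "0 \<le> s" "s \<le> t" "t \<le> T"
  shows "I1 t - I1 s = (LINT r:{s<..t}|lborel. \<bar>p r\<bar>)" "I2 t - I2 s = (LINT r:{s<..t}|lborel. (p r)\<^sup>2)"
  unfolding I1_def I2_def
  using split_int[OF st(1,2) sub_intT(2)[OF p_abs_int st(1,3)]]
        split_int[OF st(1,2) sub_intT(2)[OF p_L2 st(1,3)]] by simp_all

lemma I_mono:
  assumes st: "0 \<le> s" "s \<le> t" "t \<le> T"
  shows "I1 s \<le> I1 t \<and> I2 s \<le> I2 t"
proof -
  have "0 \<le> (LINT r:{s<..t}|lborel. \<bar>p r\<bar>)" "0 \<le> (LINT r:{s<..t}|lborel. (p r)\<^sup>2)"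
    by (rule set_integral_nonneg'; simp)+
  then show ?thesis using I_split[OF st] by simp
qed

lemma I_cs:
  assumes st: "0 \<le> s" "s \<le> t" "t \<le> T"
  shows "(I1 t - I1 s)\<^sup>2 \<le> (t - s) * (I2 t - I2 s)"
proof -
  have a: "set_integrable lborel {s<..t} (\<lambda>r. (\<bar>p r\<bar>)\<^sup>2)" using sub_intT(1)[OF p_L2 st(1,3)] by simp
  have b0: "set_integrable lborel {s<..t} (\<lambda>r. (1::real))"
    by (rule set_integrable_subset[OF const_int[of s t 1]]) auto
  have b: "set_integrable lborel {s<..t} (\<lambda>r. (1::real)\<^sup>2)" using b0 by simp
  have c: "set_integrable lborel {s<..t} (\<lambda>r. \<bar>p r\<bar> * 1)" using sub_intT(1)[OF p_abs_int st(1,3)] by simp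
  have "(LINT r:{s<..t}|lborel. \<bar>p r\<bar> * 1)\<^sup>2 \<le> (LINT r:{s<..t}|lborel. (\<bar>p r\<bar>)\<^sup>2) * (LINT r:{s<..t}|lborel. (1::real)\<^sup>2)"
    by (rule set_cs[OF a b c])
  moreover have "(LINT r:{s<..t}|lborel. (1::real)) = t - s"
    using st by (subst set_integral_const) auto
  ultimately show ?thesis using I_split[OF st] by (simp add: mult.commute)
qed

lemma I_hk:
  assumes t: "t \<in> {0..T}"
  shows "I1 t = integral {0..t} (\<lambda>r. \<bar>p r\<bar>)" "I2 t = integral {0..t} (\<lambda>r. (p r)\<^sup>2)"
  using set_borel_integral_eq_integral(2)[OF sub_intT(2)[OF p_abs_int, of 0 t]]
        set_borel_integral_eq_integral(2)[OF sub_intT(2)[OF p_L2, of 0 t]] t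
  unfolding I1_def I2_def by auto

lemma I_cont: "continuous_on {0..T} I1" "continuous_on {0..T} I2"
proof -
  have "continuous_on {0..T} (\<lambda>x. integral {0..x} (\<lambda>r. \<bar>p r\<bar>))"
    by (rule indefinite_integral_continuous_1[OF set_borel_integral_eq_integral(1)[OF p_abs_int]])
  then show "continuous_on {0..T} I1" by (rule continuous_on_eq) (simp add: I_hk)
  have "continuous_on {0..T} (\<lambda>x. integral {0..x} (\<lambda>r. (p r)\<^sup>2))"
    by (rule indefinite_integral_continuous_1[OF set_borel_integral_eq_integral(1)[OF p_L2]])
  then show "continuous_on {0..T} I2" by (rule continuous_on_eq) (simp add: I_hk)
qed

lemma I_zero: "I1 0 = 0" "I2 0 = 0"
  using I_hk[of 0] T_pos by auto

lemma step_M: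
  assumes st: "0 \<le> s" "s \<le> t" "t \<le> T" and M: "\<forall>r\<in>{s..t}. z r \<le> M"
  shows "(z t)\<^sup>2 \<le> (z s)\<^sup>2 + 2 * z s * C_B * (M + cc) * (I1 t - I1 s)
          + (1/2 + (t - s)) * C_B\<^sup>2 * (M + cc)\<^sup>2 * (I2 t - I2 s)"
proof -
  have "z s \<le> M" using M st by auto
  then have M0: "0 \<le> M" using z_nonneg[of s] by linarith
  have K0: "0 \<le> C_B * (M + cc)" using C_B_pos M0 cc_nonneg by simp
  have Gb: "norm (g r) \<le> C_B * (M + cc)" if r: "r \<in> {s<..t}" for r
  proof -
    have "norm (g r) \<le> C_B * (z r + cc)" using r st by (intro G_bound) auto
    also have "\<dots> \<le> C_B * (M + cc)" using M r C_B_pos by (intro mult_left_mono) auto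
    finally show ?thesis .
  qed
  have P: "(LINT r:{s<..t}|lborel. \<bar>p r\<bar> * norm (g r)) \<le> C_B * (M + cc) * (I1 t - I1 s)"
  proof -
    have "(LINT r:{s<..t}|lborel. \<bar>p r\<bar> * norm (g r)) \<le> (LINT r:{s<..t}|lborel. C_B * (M + cc) * \<bar>p r\<bar>)"
    proof (rule set_integral_mono)
      show "set_integrable lborel {s<..t} (\<lambda>r. \<bar>p r\<bar> * norm (g r))" by (rule sub_intT(1)[OF pG_int st(1,3)])
      show "set_integrable lborel {s<..t} (\<lambda>r. C_B * (M + cc) * \<bar>p r\<bar>)" using sub_intT(1)[OF p_abs_int st(1,3)] by simp
      fix r assume "r \<in> {s<..t}"
      then have "\<bar>p r\<bar> * norm (g r) \<le> \<bar>p r\<bar> * (C_B * (M + cc))" using Gb by (intro mult_left_mono) auto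
      then show "\<bar>p r\<bar> * norm (g r) \<le> C_B * (M + cc) * \<bar>p r\<bar>" by (simp add: mult.commute)
    qed
    then show ?thesis using I_split(1)[OF st] by simp
  qed
  have Q: "(LINT r:{s<..t}|lborel. (p r)\<^sup>2 * (norm (g r))\<^sup>2) \<le> C_B\<^sup>2 * (M + cc)\<^sup>2 * (I2 t - I2 s)"
  proof -
    have "(LINT r:{s<..t}|lborel. (p r)\<^sup>2 * (norm (g r))\<^sup>2) \<le> (LINT r:{s<..t}|lborel. C_B\<^sup>2 * (M + cc)\<^sup>2 * (p r)\<^sup>2)"
    proof (rule set_integral_mono)
      show "set_integrable lborel {s<..t} (\<lambda>r. (p r)\<^sup>2 * (norm (g r))\<^sup>2)" by (rule sub_intT(1)[OF p2G2_int st(1,3)])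
      show "set_integrable lborel {s<..t} (\<lambda>r. C_B\<^sup>2 * (M + cc)\<^sup>2 * (p r)\<^sup>2)" using sub_intT(1)[OF p_L2 st(1,3)] by simp
      fix r assume "r \<in> {s<..t}"
      then have "(norm (g r))\<^sup>2 \<le> (C_B * (M + cc))\<^sup>2" using Gb by (intro power_mono) auto
      then have "(p r)\<^sup>2 * (norm (g r))\<^sup>2 \<le> (p r)\<^sup>2 * (C_B * (M + cc))\<^sup>2" by (rule mult_left_mono) simp
      then show "(p r)\<^sup>2 * (norm (g r))\<^sup>2 \<le> C_B\<^sup>2 * (M + cc)\<^sup>2 * (p r)\<^sup>2" by (simp add: power_mult_distrib mult.commute)
    qed
    then show ?thesis using I_split(2)[OF st] by simp
  qed
  have zs: "0 \<le> z s" by (rule z_nonneg)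
  have D: "0 \<le> 1/2 + (t - s)" using st by simp
  have "2 * z s * (LINT r:{s<..t}|lborel. \<bar>p r\<bar> * norm (g r)) \<le> 2 * z s * (C_B * (M + cc) * (I1 t - I1 s))"
    using P zs by (intro mult_left_mono) auto
  moreover have "(1/2 + (t - s)) * (LINT r:{s<..t}|lborel. (p r)\<^sup>2 * (norm (g r))\<^sup>2) \<le> (1/2 + (t - s)) * (C_B\<^sup>2 * (M + cc)\<^sup>2 * (I2 t - I2 s))"
    using Q D by (rule mult_left_mono)
  moreover have "2 * z s * (C_B * (M + cc) * (I1 t - I1 s)) = 2 * z s * C_B * (M + cc) * (I1 t - I1 s)"
    "(1/2 + (t - s)) * (C_B\<^sup>2 * (M + cc)\<^sup>2 * (I2 t - I2 s)) = (1/2 + (t - s)) * C_B\<^sup>2 * (M + cc)\<^sup>2 * (I2 t - I2 s)"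
    by (simp_all only: mult.assoc)
  ultimately show ?thesis using interval_ineq[OF st] by linarith
qed

lemma main_bound:
  assumes t: "t \<in> {0..T}"
  shows "(z t)\<^sup>2 \<le> ((z 0)\<^sup>2 + 2 * C_B\<^sup>2 * cc\<^sup>2 * I2 t) * exp (2 * C_B * I1 t + t + C_B\<^sup>2 * I2 t)"
  by (rule gronwall_final[OF _ cc_nonneg z_cont _ I_cont I_zero I_mono I_cs step_M t])
     (use C_B_pos z_nonneg in auto)

lemma z0_eq: "z 0 = FN v0"
proof -
  have T0: "(0::real) \<in> {0..T}" using T_pos by simp
  have wk: "w k 0 = inner v0 (e k)" for k
  proof -
    have "(LINT r:{0..0}|lborel. exp (- lam k * (0 - r)) * h k r) = integral {0..0} (\<lambda>r. exp (- lam k * (0 - r)) * h k r)"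
      by (rule set_borel_integral_eq_integral(2)[OF mode(1)[OF T0]])
    also have "\<dots> = 0" by simp
    finally show ?thesis using mode(2)[OF T0, of k] by simp
  qed
  have s1: "(\<lambda>k. (1 + lam k) * (w k 0)\<^sup>2) sums (z 0)\<^sup>2"
    unfolding w_def z_def by (rule frac_norm_sums[OF on basis l v_dom[OF T0]])
  have s2: "(\<lambda>k. (1 + lam k) * (inner v0 (e k))\<^sup>2) sums (FN v0)\<^sup>2"
    by (rule frac_norm_sums[OF on basis l v0_dom])
  have fe: "(\<lambda>k. (1 + lam k) * (w k 0)\<^sup>2) = (\<lambda>k. (1 + lam k) * (inner v0 (e k))\<^sup>2)"
    using wk by simp
  have "(z 0)\<^sup>2 = (FN v0)\<^sup>2" using sums_unique2[OF s1[unfolded fe] s2] .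
  then show ?thesis using z_nonneg[of 0] frac_norm_nonneg[of lam e "1/2" v0]
    by (rule power2_eq_imp_eq)
qed

end


lemma final_arith:
  fixes Z a b cs L PT I1t I2t CB NT T t l0 :: real
  assumes CB: "CB > 0" and NT: "NT > 0" and Z0: "Z \<ge> 0" and T0: "T > 0" and tT: "t \<le> T" and l0: "l0 \<ge> 0"
    and I2t: "0 \<le> I2t" "I2t \<le> NT\<^sup>2 * Z\<^sup>2"
    and I1t: "0 \<le> I1t" "I1t \<le> sqrt T * NT * Z"
    and cs: "cs = 1 + l0"
    and zt: "x \<le> (Z\<^sup>2 + 2 * CB\<^sup>2 * cs * I2t) * exp (2 * CB * I1t + t + CB\<^sup>2 * I2t)"
  shows "x \<le> exp (CB * NT * ((5/2) * CB * NT * Z + 2 * sqrt T) * Z + T)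
     * (1 + (5/2) * CB\<^sup>2 * (1 + sqrt l0)\<^sup>2 * NT\<^sup>2
          + (3/2) * CB\<^sup>2 * NT\<^sup>2 * (CB\<^sup>2 * (1 + sqrt l0)\<^sup>2 * NT\<^sup>2 + 1) * Z\<^sup>2) * Z\<^sup>2"
proof -
  define q where "q = (1 + sqrt l0)\<^sup>2"
  have csq: "cs \<le> q" unfolding q_def cs using l0 by (simp add: power2_sum)
  have q0: "0 \<le> q" unfolding q_def by simp
  have ex: "2 * CB * I1t + t + CB\<^sup>2 * I2t \<le> CB * NT * ((5/2) * CB * NT * Z + 2 * sqrt T) * Z + T"
  proof -
    have a: "2 * CB * I1t \<le> 2 * CB * (sqrt T * NT * Z)" using I1t CB by (intro mult_left_mono) auto
    have b: "CB\<^sup>2 * I2t \<le> CB\<^sup>2 * (NT\<^sup>2 * Z\<^sup>2)" using I2t by (intro mult_left_mono) auto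
    have c: "0 \<le> CB\<^sup>2 * (NT\<^sup>2 * Z\<^sup>2)" by simp
    have d: "CB * NT * ((5/2) * CB * NT * Z + 2 * sqrt T) * Z = (5/2) * (CB\<^sup>2 * (NT\<^sup>2 * Z\<^sup>2)) + 2 * CB * (sqrt T * NT * Z)"
      by (simp add: power2_eq_square algebra_simps)
    show ?thesis using a b c d tT by linarith
  qed
  have pf: "Z\<^sup>2 + 2 * CB\<^sup>2 * cs * I2t \<le> (1 + (5/2) * CB\<^sup>2 * q * NT\<^sup>2
          + (3/2) * CB\<^sup>2 * NT\<^sup>2 * (CB\<^sup>2 * q * NT\<^sup>2 + 1) * Z\<^sup>2) * Z\<^sup>2"
  proof -
    have a: "2 * CB\<^sup>2 * cs * I2t \<le> 2 * CB\<^sup>2 * q * (NT\<^sup>2 * Z\<^sup>2)"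
    proof -
      have "cs * I2t \<le> q * (NT\<^sup>2 * Z\<^sup>2)" using csq I2t cs l0 q0 by (intro mult_mono) auto
      then have "2 * CB\<^sup>2 * (cs * I2t) \<le> 2 * CB\<^sup>2 * (q * (NT\<^sup>2 * Z\<^sup>2))" by (intro mult_left_mono) auto
      then show ?thesis by (simp add: mult.assoc)
    qed
    have b: "0 \<le> (3/2) * CB\<^sup>2 * NT\<^sup>2 * (CB\<^sup>2 * q * NT\<^sup>2 + 1) * Z\<^sup>2 * Z\<^sup>2" using q0 by simp
    have c: "0 \<le> (1/2) * CB\<^sup>2 * q * NT\<^sup>2 * Z\<^sup>2" using q0 by simp
    have d: "(1 + (5/2) * CB\<^sup>2 * q * NT\<^sup>2 + (3/2) * CB\<^sup>2 * NT\<^sup>2 * (CB\<^sup>2 * q * NT\<^sup>2 + 1) * Z\<^sup>2) * Z\<^sup>2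
       = Z\<^sup>2 + 2 * CB\<^sup>2 * q * (NT\<^sup>2 * Z\<^sup>2) + (1/2) * CB\<^sup>2 * q * NT\<^sup>2 * Z\<^sup>2 + (3/2) * CB\<^sup>2 * NT\<^sup>2 * (CB\<^sup>2 * q * NT\<^sup>2 + 1) * Z\<^sup>2 * Z\<^sup>2"
      by (simp add: algebra_simps)
    show ?thesis using a b c d by linarith
  qed
  have p0: "0 \<le> Z\<^sup>2 + 2 * CB\<^sup>2 * cs * I2t" using I2t cs l0 by simp
  have "x \<le> (Z\<^sup>2 + 2 * CB\<^sup>2 * cs * I2t) * exp (2 * CB * I1t + t + CB\<^sup>2 * I2t)" by (rule zt)
  also have "\<dots> \<le> ((1 + (5/2) * CB\<^sup>2 * q * NT\<^sup>2
          + (3/2) * CB\<^sup>2 * NT\<^sup>2 * (CB\<^sup>2 * q * NT\<^sup>2 + 1) * Z\<^sup>2) * Z\<^sup>2) * exp (CB * NT * ((5/2) * CB * NT * Z + 2 * sqrt T) * Z + T)"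
  proof (rule mult_mono[OF pf])
    show "exp (2 * CB * I1t + t + CB\<^sup>2 * I2t) \<le> exp (CB * NT * ((5/2) * CB * NT * Z + 2 * sqrt T) * Z + T)"
      using ex by simp
    have x1: "0 \<le> (5/2) * CB\<^sup>2 * q * NT\<^sup>2" using q0 by simp
    have x2: "0 \<le> (3/2) * CB\<^sup>2 * NT\<^sup>2 * (CB\<^sup>2 * q * NT\<^sup>2 + 1) * Z\<^sup>2" using q0 by simp
    have "0 \<le> 1 + (5/2) * CB\<^sup>2 * q * NT\<^sup>2 + (3/2) * CB\<^sup>2 * NT\<^sup>2 * (CB\<^sup>2 * q * NT\<^sup>2 + 1) * Z\<^sup>2"
      using x1 x2 by linarith
    then show "0 \<le> (1 + (5/2) * CB\<^sup>2 * q * NT\<^sup>2 + (3/2) * CB\<^sup>2 * NT\<^sup>2 * (CB\<^sup>2 * q * NT\<^sup>2 + 1) * Z\<^sup>2) * Z\<^sup>2"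
      by simp
    show "0 \<le> exp (2 * CB * I1t + t + CB\<^sup>2 * I2t)" by simp
  qed
  finally show ?thesis by (simp add: q_def mult.commute mult.left_commute mult.assoc)
qed

theorem proposition2p5:
  fixes D :: "'a::{real_inner,complete_space,second_countable_topology} set"
    and A :: "'a \<Rightarrow> 'a"
    and lam :: "nat \<Rightarrow> real" and phi :: "nat \<Rightarrow> 'a"
    and DB :: "'a set" and B :: "'a \<Rightarrow> 'a"
    and C_B N_T T :: real and v0 :: 'a and p :: "real \<Rightarrow> real" and v :: "real \<Rightarrow> 'a"
  assumes A_sa: "self_adjoint_op D A"
    and A_nonneg: "\<forall>x\<in>D. inner (A x) x \<ge> 0"
    and A_res: "\<exists>l>0. compact_resolvent_at D A l"
    and lam_nonneg: "0 \<le> lam 0" and lam_mono: "mono lam"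
    and phi_D: "\<forall>k. phi k \<in> D"
    and phi_eig: "\<forall>k. A (phi k) = lam k *\<^sub>R phi k"
    and phi_orth: "\<forall>i j. inner (phi i) (phi j) = (if i = j then 1 else 0)"
    and phi_basis: "closure (span (range phi)) = UNIV"
    and B_lin: "lin_op_on DB B"
    and B_dom: "frac_dom lam phi (1/2) \<subseteq> DB"
    and C_B_pos: "C_B > 0"
    and B_bound: "\<forall>x\<in>frac_dom lam phi (1/2). norm (B x) \<le> C_B * frac_norm lam phi (1/2) x"
    and T_pos: "T > 0"
    and v0_dom: "v0 \<in> frac_dom lam phi (1/2)"
    and p_meas: "set_borel_measurable lborel {0..T} p"
    and p_L2: "set_integrable lborel {0..T} (\<lambda>t. (p t)\<^sup>2)"
    and N_T_pos: "N_T > 0"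
    and p_bound: "sqrt (LINT t:{0..T}|lborel. (p t)\<^sup>2) \<le> N_T * norm v0"
    and v_sol: "mild_solution lam phi B T v0 p v"
  shows "\<forall>t\<in>{0..T}. (frac_norm lam phi (1/2) (v t))\<^sup>2 \<le>
     exp (C_B * N_T * ((5/2) * C_B * N_T * frac_norm lam phi (1/2) v0 + 2 * sqrt T)
            * frac_norm lam phi (1/2) v0 + T)
     * (1 + (5/2) * C_B\<^sup>2 * (1 + sqrt (lam 0))\<^sup>2 * N_T\<^sup>2
          + (3/2) * C_B\<^sup>2 * N_T\<^sup>2 * (C_B\<^sup>2 * (1 + sqrt (lam 0))\<^sup>2 * N_T\<^sup>2 + 1)
            * (frac_norm lam phi (1/2) v0)\<^sup>2)
     * (frac_norm lam phi (1/2) v0)\<^sup>2"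
proof
  fix t assume t: "t \<in> {0..T}"
  have on: "orthonormal_seq phi" using phi_orth by (simp add: orthonormal_seq_def)
  have l: "\<forall>k. lam k \<ge> 0"
  proof
    fix k
    have "lam 0 \<le> lam k" by (rule monoD[OF lam_mono]) simp
    then show "lam k \<ge> 0" using lam_nonneg by linarith
  qed
  interpret S: setting lam phi B DB C_B T v0 p v
    by (unfold_locales; (rule on phi_basis l B_lin B_dom C_B_pos B_bound T_pos v0_dom p_meas p_L2 v_sol)?)
  define Z where "Z = frac_norm lam phi (1/2) v0"
  have Z0: "0 \<le> Z" unfolding Z_def by (rule frac_norm_nonneg)
  have nZ: "norm v0 \<le> Z" unfolding Z_def by (rule frac_norm_ge)
  have T0: "T \<in> {0..T}" using T_pos by simp
  define PT where "PT = S.I2 T"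
  have PT0: "0 \<le> PT" using S.I_mono[of 0 T] T_pos S.I_zero by (simp add: PT_def)
  have sPT: "sqrt PT \<le> N_T * Z"
  proof -
    have "sqrt PT \<le> N_T * norm v0" using p_bound by (simp add: PT_def S.I2_def)
    also have "\<dots> \<le> N_T * Z" using nZ N_T_pos by (intro mult_left_mono) auto
    finally show ?thesis .
  qed
  have PTb: "PT \<le> N_T\<^sup>2 * Z\<^sup>2"
  proof -
    have "PT = (sqrt PT)\<^sup>2" using PT0 by simp
    also have "\<dots> \<le> (N_T * Z)\<^sup>2" using sPT PT0 by (intro power_mono) auto
    finally show ?thesis by (simp add: power_mult_distrib)
  qed
  have tt: "0 \<le> t" "t \<le> T" using t by auto
  have I2t: "0 \<le> S.I2 t" "S.I2 t \<le> N_T\<^sup>2 * Z\<^sup>2"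
    using S.I_mono[of 0 t] S.I_mono[of t T] S.I_zero tt PTb by (auto simp: PT_def)
  have I1T: "S.I1 T \<le> sqrt T * N_T * Z"
  proof -
    have "(S.I1 T)\<^sup>2 \<le> T * PT" using S.I_cs[of 0 T] T_pos S.I_zero by (simp add: PT_def)
    then have "S.I1 T \<le> sqrt (T * PT)" by (rule real_le_rsqrt)
    also have "\<dots> = sqrt T * sqrt PT" by (rule real_sqrt_mult)
    also have "\<dots> \<le> sqrt T * (N_T * Z)" using sPT T_pos by (intro mult_left_mono) auto
    finally show ?thesis by (simp add: mult.assoc)
  qed
  have I1t: "0 \<le> S.I1 t" "S.I1 t \<le> sqrt T * N_T * Z"
    using S.I_mono[of 0 t] S.I_mono[of t T] S.I_zero tt I1T by auto
  have cc2: "S.cc\<^sup>2 = 1 + lam 0" unfolding S.cc_def using lam_nonneg by simp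
  have zt: "(frac_norm lam phi (1/2) (v t))\<^sup>2 \<le> (Z\<^sup>2 + 2 * C_B\<^sup>2 * S.cc\<^sup>2 * S.I2 t) * exp (2 * C_B * S.I1 t + t + C_B\<^sup>2 * S.I2 t)"
    using S.main_bound[OF t] S.z0_eq unfolding S.z_def Z_def by simp
  show "(frac_norm lam phi (1/2) (v t))\<^sup>2 \<le>
     exp (C_B * N_T * ((5/2) * C_B * N_T * frac_norm lam phi (1/2) v0 + 2 * sqrt T)
            * frac_norm lam phi (1/2) v0 + T)
     * (1 + (5/2) * C_B\<^sup>2 * (1 + sqrt (lam 0))\<^sup>2 * N_T\<^sup>2
          + (3/2) * C_B\<^sup>2 * N_T\<^sup>2 * (C_B\<^sup>2 * (1 + sqrt (lam 0))\<^sup>2 * N_T\<^sup>2 + 1)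
            * (frac_norm lam phi (1/2) v0)\<^sup>2)
     * (frac_norm lam phi (1/2) v0)\<^sup>2"
    unfolding Z_def[symmetric]
    by (rule final_arith[OF C_B_pos N_T_pos Z0 T_pos tt(2) lam_nonneg I2t I1t cc2 zt])
qed


end
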